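(* Let $l\ge1$, $\vec n=(n_l,\dots,n_0)$ with all $n_i\ge1$, $\mu>0$, $1\le p<\infty$, $0<q\le\infty$, and let $\mathcal C^{l,\vec n}_{\mu_{p,q}\le\mu}=\{\vec C_l\in\mathcal C^{l,\vec n}:\mu_{p,q}(\vec C_l)\le\mu\}$. Then for every sample $S=(\vec x_1,\dots,\vec x_m)$: (1) if $1\le p\le2$, $R_S(\mathcal F\circ\mathcal C^{l,\vec n}_{\mu_{p,q}\le\mu})\le\mu\,4^{(\sum_{i=1}^ln_i)\max\{1/p^*,1/q\}}\frac{\sqrt{\min\{p^*,8n_0\}}}{\sqrt m}K_p(S,H)$; (2) if $2<p<\infty$, $R_S(\mathcal F\circ\mathcal C^{l,\vec n}_{\mu_{p,q}\le\mu})\le\mu\,4^{(\sum_{i=1}^ln_i)\max\{1/p^*,1/q\}}\frac{\sqrt{p^*}}{m^{1/p}}K_p(S,H)$.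
   Context: Pauli notation $P_{\vec z}$ as tensor products of $P_0=\mathbb I,P_1=X,P_2=Y,P_3=Z$. Representation matrix of a linear map $\Phi$ from $a$ to $b$ qubits: $M^\Phi_{\vec z\vec x}=2^{-b}\mathrm{Tr}(P_{\vec z}\Phi(P_{\vec x}))$. Group norm: $\|M\|_{p,q}=(\frac1{N_1}\sum_i\|M_i\|_p^q)^{1/q}$ for an $N_1\times N_2$ matrix with rows $M_i$ ($\max_i\|M_i\|_p$ if $q=\infty$). $p^*$ is the Hölder conjugate. $\mathcal C^{l,\vec n}$ is the set of depth-$l$ circuits $\vec C_l=(\Phi_l,\dots,\Phi_1)$ with $\Phi_i$ a quantum channel from $n_{i-1}$ to $n_i$ qubits, implementing $C_l=\Phi_l\circ\cdots\circ\Phi_1$. $\mu_{p,q}(\vec C_l)=\prod_{i=1}^l\|M^{\Phi_i}\|_{p,q}$. Setup: data encoded as $n_0$-qubit pure states $\rho(\vec x)$, $H$ Hermitian on $n_l$ qubits, $f_{\vec C_l}(\vec x)=\mathrm{Tr}(C_l(\rho(\vec x))H)$; $R_S(\mathcal G)=\mathbb E_{\vec\epsilon}\frac1m\sup_{g\in\mathcal G}|\sum_i\epsilon_ig(\vec x_i)|$ with i.i.d. uniform signs. $\vec\alpha\in\mathbb R^{4^{n_l}}$ has entries $\mathrm{Tr}(P_{\vec z}H)$, $\vec f_I(\vec x)\in\mathbb R^{4^{n_0}}$ has entries $2^{-n_0}\mathrm{Tr}(P_{\vec z}\rho(\vec x))$, $K_p(S,H)=\|\vec\alpha\|_p\max_i\|\vec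 f_I(\vec x_i)\|_{p^*}$. *)

theory Defs
  imports "HOL-Analysis.Analysis" "Jordan_Normal_Form.Matrix"
begin

definition mtrace :: "complex mat \<Rightarrow> complex" where
  "mtrace A = (\<Sum>i<dim_row A. A $$ (i,i))"

definition kron :: "complex mat \<Rightarrow> complex mat \<Rightarrow> complex mat" where
  "kron A B = mat (dim_row A * dim_row B) (dim_col A * dim_col B)
     (\<lambda>(i,j). A $$ (i div dim_row B, j div dim_col B) * B $$ (i mod dim_row B, j mod dim_col B))"

definition hermitian :: "nat \<Rightarrow> complex mat \<Rightarrow> bool" where
  "hermitian d A \<longleftrightarrow> A \<in> carrier_mat d d \<and> (\<forall>i<d. \<forall>j<d. A $$ (i,j) = cnj (A $$ (j,i)))"

definition psd :: "nat \<Rightarrow> complex mat \<Rightarrow> bool" where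
  "psd d A \<longleftrightarrow> hermitian d A \<and>
     (\<forall>v \<in> carrier_vec d. 0 \<le> Re (\<Sum>i<d. \<Sum>j<d. cnj (v $ i) * A $$ (i,j) * v $ j))"

definition pure_state :: "nat \<Rightarrow> complex mat \<Rightarrow> bool" where
  "pure_state n \<rho> \<longleftrightarrow> (\<exists>v \<in> carrier_vec (2^n). (\<Sum>i<2^n. (cmod (v $ i))\<^sup>2) = 1 \<and>
     \<rho> = mat (2^n) (2^n) (\<lambda>(i,j). v $ i * cnj (v $ j)))"

definition pauli :: "nat \<Rightarrow> complex mat" where
  "pauli k = (if k = 0 then mat_of_rows_list 2 [[1,0],[0,1]]
     else if k = 1 then mat_of_rows_list 2 [[0,1],[1,0]]
     else if k = 2 then mat_of_rows_list 2 [[0,-\<i>],[\<i>,0]]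
     else mat_of_rows_list 2 [[1,0],[0,-1]])"

text \<open>Pauli string on n qubits indexed by z < 4^n (base-4 digits of z)\<close>
fun pauli_string :: "nat \<Rightarrow> nat \<Rightarrow> complex mat" where
  "pauli_string 0 z = 1\<^sub>m 1"
| "pauli_string (Suc n) z = kron (pauli (z mod 4)) (pauli_string n (z div 4))"

text \<open>(id_k \<otimes> Phi) applied to a (k*2^a)-dimensional matrix, blockwise\<close>
definition ext_id :: "nat \<Rightarrow> nat \<Rightarrow> nat \<Rightarrow> (complex mat \<Rightarrow> complex mat) \<Rightarrow> complex mat \<Rightarrow> complex mat" where
  "ext_id k a b \<Phi> X = mat (k * 2^b) (k * 2^b) (\<lambda>(r,c).
      \<Phi> (mat (2^a) (2^a) (\<lambda>(r',c'). X $$ ((r div 2^b) * 2^a + r', (c div 2^b) * 2^a + c')))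
        $$ (r mod 2^b, c mod 2^b))"

definition quantum_channel :: "nat \<Rightarrow> nat \<Rightarrow> (complex mat \<Rightarrow> complex mat) \<Rightarrow> bool" where
  "quantum_channel a b \<Phi> \<longleftrightarrow>
     (\<forall>A \<in> carrier_mat (2^a) (2^a). \<Phi> A \<in> carrier_mat (2^b) (2^b)) \<and>
     (\<forall>A \<in> carrier_mat (2^a) (2^a). \<forall>B \<in> carrier_mat (2^a) (2^a). \<Phi> (A + B) = \<Phi> A + \<Phi> B) \<and>
     (\<forall>A \<in> carrier_mat (2^a) (2^a). \<forall>c. \<Phi> (c \<cdot>\<^sub>m A) = c \<cdot>\<^sub>m \<Phi> A) \<and>
     (\<forall>A \<in> carrier_mat (2^a) (2^a). mtrace (\<Phi> A) = mtrace A) \<and>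
     (\<forall>k. \<forall>X. psd (k * 2^a) X \<longrightarrow> psd (k * 2^b) (ext_id k a b \<Phi> X))"

definition rep_mat :: "nat \<Rightarrow> nat \<Rightarrow> (complex mat \<Rightarrow> complex mat) \<Rightarrow> complex mat" where
  "rep_mat a b \<Phi> = mat (4^b) (4^a) (\<lambda>(z,x). mtrace (pauli_string b z * \<Phi> (pauli_string a x)) / 2^b)"

definition lnorm :: "nat \<Rightarrow> (nat \<Rightarrow> complex) \<Rightarrow> ereal \<Rightarrow> real" where
  "lnorm n v r = (if r = \<infinity> then Max ((\<lambda>i. cmod (v i)) ` {..<n})
                  else (\<Sum>i<n. cmod (v i) powr real_of_ereal r) powr (1 / real_of_ereal r))"

definition group_norm :: "complex mat \<Rightarrow> real \<Rightarrow> ereal \<Rightarrow> real" where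
  "group_norm M p q =
     (let rn = (\<lambda>i. lnorm (dim_col M) (\<lambda>j. M $$ (i,j)) (ereal p)) in
      if q = \<infinity> then Max (rn ` {..<dim_row M})
      else ((1 / real (dim_row M)) * (\<Sum>i<dim_row M. rn i powr real_of_ereal q)) powr (1 / real_of_ereal q))"

definition hconj :: "real \<Rightarrow> ereal" where
  "hconj p = (if p = 1 then \<infinity> else ereal (p / (p - 1)))"

definition ereal_recip :: "ereal \<Rightarrow> real" where
  "ereal_recip q = (if q = \<infinity> then 0 else 1 / real_of_ereal q)"

text \<open>ns = [n_0, ..., n_l]; Cs = [Phi_1, ..., Phi_l], Phi_i a channel from n_{i-1} to n_i qubits\<close>
definition circuits :: "nat \<Rightarrow> nat list \<Rightarrow> (complex mat \<Rightarrow> complex mat) list set" where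
  "circuits l ns = {Cs. length Cs = l \<and>
      (\<forall>i<l. quantum_channel (ns ! i) (ns ! Suc i) (Cs ! i))}"

text \<open>C_l = Phi_l o ... o Phi_1\<close>
definition circuit_map :: "(complex mat \<Rightarrow> complex mat) list \<Rightarrow> complex mat \<Rightarrow> complex mat" where
  "circuit_map Cs = fold (\<lambda>\<Phi> acc. \<Phi> \<circ> acc) Cs id"

definition mu_pq :: "real \<Rightarrow> ereal \<Rightarrow> nat list \<Rightarrow> (complex mat \<Rightarrow> complex mat) list \<Rightarrow> real" where
  "mu_pq p q ns Cs = (\<Prod>i<length Cs. group_norm (rep_mat (ns ! i) (ns ! Suc i) (Cs ! i)) p q)"

definition model_fun :: "('x \<Rightarrow> complex mat) \<Rightarrow> complex mat \<Rightarrow> (complex mat \<Rightarrow> complex mat) list \<Rightarrow> 'x \<Rightarrow> real" where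
  "model_fun \<rho> H Cs x = Re (mtrace (circuit_map Cs (\<rho> x) * H))"

text \<open>expectation over uniform sign vectors; sup of the absolute values
  (taken as 0 for an empty class, the natural convention since the values are \<ge> 0)\<close>
definition rademacher :: "'x list \<Rightarrow> ('x \<Rightarrow> real) set \<Rightarrow> real" where
  "rademacher xs G =
    (let m = length xs; E = {es :: real list. length es = m \<and> set es \<subseteq> {-1, 1}} in
     (1 / real (card E)) * (\<Sum>es\<in>E. (1 / real m) *
        Sup (insert 0 {\<bar>\<Sum>i<m. es ! i * g (xs ! i)\<bar> | g. g \<in> G})))"

definition alpha_vec :: "nat \<Rightarrow> complex mat \<Rightarrow> nat \<Rightarrow> complex" where
  "alpha_vec nl H z = mtrace (pauli_string nl z * H)"

definition fI_vec :: "nat \<Rightarrow> complex mat \<Rightarrow> nat \<Rightarrow> complex" where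
  "fI_vec n0 \<rho> z = mtrace (pauli_string n0 z * \<rho>) / 2^n0"

definition K_p :: "real \<Rightarrow> nat \<Rightarrow> nat \<Rightarrow> ('x \<Rightarrow> complex mat) \<Rightarrow> 'x list \<Rightarrow> complex mat \<Rightarrow> real" where
  "K_p p n0 nl \<rho> xs H = lnorm (4^nl) (alpha_vec nl H) (ereal p) *
      Max ((\<lambda>x. lnorm (4^n0) (fI_vec n0 (\<rho> x)) (hconj p)) ` set xs)"

end

theory Submission
  imports Defs
begin

lemma pauli_dims[simp]: "dim_row (pauli k) = 2" "dim_col (pauli k) = 2"
  by (simp_all add: pauli_def mat_of_rows_list_def)

lemma pauli_carrier[simp]: "pauli k \<in> carrier_mat 2 2"
  by (rule carrier_matI) simp_all
lemma pauli_entry: "i < 2 \<Longrightarrow> j < 2 \<Longrightarrow> pauli k $$ (i,j) =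
  (if k = 0 then (if i = j then 1 else 0)
   else if k = 1 then (if i = j then 0 else 1)
   else if k = 2 then (if i = j then 0 else if i = 0 then -\<i> else \<i>)
   else (if i = j then (if i = 0 then 1 else -1) else 0))"
  by (auto simp: pauli_def mat_of_rows_list_def less_2_cases_iff)

lemma pauli_complete2:
  assumes "r < 2" "s < 2" "r' < 2" "s' < 2"
  shows "(\<Sum>a<4. pauli a $$ (r',s') * pauli a $$ (r,s)) = (if r = s' \<and> s = r' then 2 else 0)"
  using assms
  by (auto simp: pauli_entry less_2_cases_iff numeral_eq_Suc lessThan_Suc)

lemma pauli_herm: "i < 2 \<Longrightarrow> j < 2 \<Longrightarrow> cnj (pauli k $$ (i,j)) = pauli k $$ (j,i)"
  by (auto simp: pauli_entry less_2_cases_iff)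

lemma kron_dims[simp]: "dim_row (kron A B) = dim_row A * dim_row B" "dim_col (kron A B) = dim_col A * dim_col B"
  by (simp_all add: kron_def)

lemma ps_dims[simp]: "dim_row (pauli_string n z) = 2^n" "dim_col (pauli_string n z) = 2^n"
  by (induction n arbitrary: z) simp_all

lemma ps_carrier[simp]: "pauli_string n z \<in> carrier_mat (2^n) (2^n)"
  by (rule carrier_matI) simp_all

lemma ps_Suc_entry:
  assumes "i < 2 * 2^n" "j < 2 * 2^n"
  shows "pauli_string (Suc n) z $$ (i,j) =
     pauli (z mod 4) $$ (i div 2^n, j div 2^n) * pauli_string n (z div 4) $$ (i mod 2^n, j mod 2^n)"
  using assms by (simp add: kron_def)

lemma ps_herm: "i < 2^n \<Longrightarrow> j < 2^n \<Longrightarrow> cnj (pauli_string n z $$ (i,j)) = pauli_string n z $$ (j,i)"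
proof (induction n arbitrary: z i j)
  case 0
  then show ?case by simp
next
  case (Suc n)
  have d: "i div 2^n < 2" "j div 2^n < 2" using Suc.prems
    by (auto simp: less_mult_imp_div_less)
  have m: "i mod 2^n < 2^n" "j mod 2^n < 2^n" by auto
  have i2: "i < 2*2^n" "j < 2*2^n" using Suc.prems by auto
  show ?case
    unfolding ps_Suc_entry[OF i2] ps_Suc_entry[OF i2(2) i2(1)]
    by (simp add: Suc.IH[OF m] pauli_herm[OF d])
qed

lemma swap4: "(\<Sum>b\<in>B. \<Sum>a\<in>A. \<Sum>r\<in>R. \<Sum>s\<in>S. F b a r s) = (\<Sum>r\<in>R. \<Sum>s\<in>S. \<Sum>a\<in>A. \<Sum>b\<in>B. (F b a r s :: 'z::comm_monoid_add))"
proof -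
  have 1: "(\<Sum>a\<in>A. \<Sum>r\<in>R. \<Sum>s\<in>S. F b a r s) = (\<Sum>r\<in>R. \<Sum>s\<in>S. \<Sum>a\<in>A. F b a r s)" for b
  proof -
    have "(\<Sum>a\<in>A. \<Sum>r\<in>R. \<Sum>s\<in>S. F b a r s) = (\<Sum>r\<in>R. \<Sum>a\<in>A. \<Sum>s\<in>S. F b a r s)"
      by (rule sum.swap)
    also have "\<dots> = (\<Sum>r\<in>R. \<Sum>s\<in>S. \<Sum>a\<in>A. F b a r s)"
      by (rule sum.cong[OF refl], rule sum.swap)
    finally show ?thesis .
  qed
  have "(\<Sum>b\<in>B. \<Sum>a\<in>A. \<Sum>r\<in>R. \<Sum>s\<in>S. F b a r s) = (\<Sum>b\<in>B. \<Sum>r\<in>R. \<Sum>s\<in>S. \<Sum>a\<in>A. F b a r s)"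
    by (simp only: 1)
  also have "\<dots> = (\<Sum>r\<in>R. \<Sum>b\<in>B. \<Sum>s\<in>S. \<Sum>a\<in>A. F b a r s)" by (rule sum.swap)
  also have "\<dots> = (\<Sum>r\<in>R. \<Sum>s\<in>S. \<Sum>b\<in>B. \<Sum>a\<in>A. F b a r s)"
    by (rule sum.cong[OF refl], rule sum.swap)
  also have "\<dots> = (\<Sum>r\<in>R. \<Sum>s\<in>S. \<Sum>a\<in>A. \<Sum>b\<in>B. F b a r s)"
    by (rule sum.cong[OF refl], rule sum.cong[OF refl], rule sum.swap)
  finally show ?thesis .
qed

lemma sum_split_mult: fixes g :: "nat \<Rightarrow> 'a::comm_monoid_add"
  shows "(\<Sum>I<k*D. g I) = (\<Sum>r<k. \<Sum>i<D. g (r*D + i))"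
proof -
  have "(\<Sum>I<k*D. g I) = (\<Sum>m<k. sum g {m*D..<m*D+D})"
    using sum.nat_group[where g=g and k=D and n=k] by simp
  also have "\<dots> = (\<Sum>r<k. \<Sum>i<D. g (r*D + i))"
  proof (rule sum.cong[OF refl])
    fix m
    have "sum g {m*D..<m*D+D} = sum g {0+m*D..<D+m*D}" by (simp add: add.commute)
    also have "\<dots> = (\<Sum>i=0..<D. g (i + m*D))" by (rule sum.shift_bounds_nat_ivl)
    finally show "sum g {m*D..<m*D+D} = (\<Sum>i<D. g (m*D + i))"
      by (simp add: atLeast0LessThan add.commute)
  qed
  finally show ?thesis .
qed

lemma mtrace_mult: "A \<in> carrier_mat d d \<Longrightarrow> B \<in> carrier_mat d d \<Longrightarrow>
  mtrace (A * B) = (\<Sum>i<d. \<Sum>j<d. A $$ (i,j) * B $$ (j,i))"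
  unfolding mtrace_def by (auto simp: scalar_prod_def atLeast0LessThan intro!: sum.cong)

lemma pauli_complete:
  assumes "A \<in> carrier_mat (2^n) (2^n)" "i < 2^n" "j < 2^n"
  shows "A $$ (i,j) = (\<Sum>x<4^n. mtrace (pauli_string n x * A) / 2^n * pauli_string n x $$ (i,j))"
  using assms
proof (induction n arbitrary: A i j)
  case 0
  then show ?case by (simp add: mtrace_def)
next
  case (Suc n)
  define D :: nat where "D = 2^n"
  have D0: "D > 0" by (simp add: D_def)
  have A: "A \<in> carrier_mat (2*D) (2*D)" using Suc.prems by (simp add: D_def)
  define blk where "blk s r = mat D D (\<lambda>(a,b). A $$ (s*D+a, r*D+b))" for s r :: nat
  have blkc: "blk s r \<in> carrier_mat D D" for s r by (simp add: blk_def)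
  define T where "T b s r = mtrace (pauli_string n b * blk s r)" for b s r
  have step1: "mtrace (pauli_string (Suc n) (a + b*4) * A) =
      (\<Sum>r'<2. \<Sum>s'<2. pauli a $$ (r',s') * T b s' r')" if a4: "a < 4" for a b
  proof -
    have am: "(a + b*4) mod 4 = a" "(a + b*4) div 4 = b" using a4 by auto
    have psc: "pauli_string (Suc n) (a + b*4) \<in> carrier_mat (2*D) (2*D)"
      using ps_carrier[of "Suc n" "a + b*4"] unfolding D_def by (simp only: power_Suc)
    have "mtrace (pauli_string (Suc n) (a + b*4) * A) =
       (\<Sum>I<2*D. \<Sum>J<2*D. pauli_string (Suc n) (a + b*4) $$ (I,J) * A $$ (J,I))"
      by (rule mtrace_mult[OF psc A])
    also have "\<dots> = (\<Sum>r'<2. \<Sum>i<D. \<Sum>s'<2. \<Sum>j<D.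
        pauli_string (Suc n) (a + b*4) $$ (r'*D+i, s'*D+j) * A $$ (s'*D+j, r'*D+i))"
      by (simp add: sum_split_mult)
    also have "\<dots> = (\<Sum>r'<2. \<Sum>i<D. \<Sum>s'<2. \<Sum>j<D.
        pauli a $$ (r',s') * (pauli_string n b $$ (i,j) * blk s' r' $$ (j,i)))"
    proof (intro sum.cong refl)
      fix r' i s' j :: nat assume h: "r' \<in> {..<2}" "i \<in> {..<D}" "s' \<in> {..<2}" "j \<in> {..<D}"
      have l: "r'*D+i < 2*2^n" "s'*D+j < 2*2^n" using h
        by (auto simp: D_def less_2_cases_iff)
      have dm: "(r'*D+i) div 2^n = r'" "(r'*D+i) mod 2^n = i"
               "(s'*D+j) div 2^n = s'" "(s'*D+j) mod 2^n = j" using h by (auto simp: D_def)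
      show "pauli_string (Suc n) (a + b*4) $$ (r'*D+i, s'*D+j) * A $$ (s'*D+j, r'*D+i) =
        pauli a $$ (r',s') * (pauli_string n b $$ (i,j) * blk s' r' $$ (j,i))"
        unfolding ps_Suc_entry[OF l] dm am using h by (simp add: blk_def)
    qed
    also have "\<dots> = (\<Sum>r'<2. \<Sum>s'<2. pauli a $$ (r',s') * (\<Sum>i<D. \<Sum>j<D.
        pauli_string n b $$ (i,j) * blk s' r' $$ (j,i)))"
      by (rule sum.cong[OF refl], subst sum.swap, simp add: sum_distrib_left)
    also have "\<dots> = (\<Sum>r'<2. \<Sum>s'<2. pauli a $$ (r',s') * T b s' r')"
      unfolding T_def using mtrace_mult[OF _ blkc, of "pauli_string n b"]
      by (simp add: D_def)
    finally show ?thesis .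
  qed
  let ?I = "i div D" and ?i = "i mod D" and ?J = "j div D" and ?j = "j mod D"
  have Ib: "?I < 2" "?J < 2" "?i < D" "?j < D" using Suc.prems D0
    by (auto simp: D_def less_mult_imp_div_less)
  have IH: "blk s' r' $$ (?i, ?j) = (\<Sum>b<4^n. T b s' r' / 2^n * pauli_string n b $$ (?i,?j))" for s' r'
    unfolding T_def using Suc.IH[OF _ , of "blk s' r'" ?i ?j] blkc Ib by (simp add: D_def)
  have "(\<Sum>x<4^Suc n. mtrace (pauli_string (Suc n) x * A) / 2^Suc n * pauli_string (Suc n) x $$ (i,j))
     = (\<Sum>b<4^n. \<Sum>a<4. mtrace (pauli_string (Suc n) (a + b*4) * A) / 2^Suc n
          * pauli_string (Suc n) (a + b*4) $$ (i,j))"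
    using sum_split_mult[of "\<lambda>x. mtrace (pauli_string (Suc n) x * A) / 2^Suc n * pauli_string (Suc n) x $$ (i,j)" "4^n" 4]
    by (simp add: mult.commute add.commute)
  also have "\<dots> = (\<Sum>b<4^n. \<Sum>a<4. \<Sum>r'<2. \<Sum>s'<2.
        (pauli a $$ (r',s') * pauli a $$ (?I,?J) / 2) * (T b s' r' / 2^n * pauli_string n b $$ (?i,?j)))"
  proof (intro sum.cong refl)
    fix b a assume a: "a \<in> {..<(4::nat)}"
    have am: "(a + b*4) mod 4 = a" "(a + b*4) div 4 = b" using a by auto
    have l: "i < 2*2^n" "j < 2*2^n" using Suc.prems by auto
    show "mtrace (pauli_string (Suc n) (a + b*4) * A) / 2^Suc n * pauli_string (Suc n) (a + b*4) $$ (i,j) =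
      (\<Sum>r'<2. \<Sum>s'<2. (pauli a $$ (r',s') * pauli a $$ (?I,?J) / 2) * (T b s' r' / 2^n * pauli_string n b $$ (?i,?j)))"
    proof -
      have "(\<Sum>r'<2. \<Sum>s'<2. (pauli a $$ (r',s') * pauli a $$ (?I,?J) / 2) * (T b s' r' / 2^n * pauli_string n b $$ (?i,?j)))
         = (\<Sum>r'<2. \<Sum>s'<2. (pauli a $$ (r',s') * T b s' r') * (pauli a $$ (?I,?J) * pauli_string n b $$ (?i,?j) / (2 * 2^n)))"
        by (intro sum.cong refl) simp
      also have "\<dots> = (\<Sum>r'<2. \<Sum>s'<2. pauli a $$ (r',s') * T b s' r') * (pauli a $$ (?I,?J) * pauli_string n b $$ (?i,?j) / (2 * 2^n))"
        by (simp only: sum_distrib_right)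
      also have "\<dots> = mtrace (pauli_string (Suc n) (a + b*4) * A) / 2^Suc n * pauli_string (Suc n) (a + b*4) $$ (i,j)"
        unfolding step1[of a b, OF a[simplified]] ps_Suc_entry[OF l] am D_def by simp
      finally show ?thesis by simp
    qed
  qed
  also have "\<dots> = (\<Sum>r'<2. \<Sum>s'<2. (\<Sum>a<4. pauli a $$ (r',s') * pauli a $$ (?I,?J) / 2) *
        (\<Sum>b<4^n. T b s' r' / 2^n * pauli_string n b $$ (?i,?j)))"
    by (subst swap4) (simp only: sum_product)
  also have "\<dots> = (\<Sum>r'<2. \<Sum>s'<2. (\<Sum>a<4. pauli a $$ (r',s') * pauli a $$ (?I,?J)) / 2 * blk s' r' $$ (?i,?j))"
    by (simp only: IH[symmetric] sum_divide_distrib)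
  also have "\<dots> = (\<Sum>r'<2. \<Sum>s'<2. (if ?I = s' \<and> ?J = r' then blk s' r' $$ (?i,?j) else 0))"
    by (intro sum.cong refl) (simp add: pauli_complete2 Ib)
  also have "\<dots> = blk ?I ?J $$ (?i,?j)"
    using Ib by (auto simp: numeral_2_eq_2 lessThan_Suc less_Suc_eq)
  also have "\<dots> = A $$ (i,j)"
    using Ib by (simp add: blk_def)
  finally show ?case by (rule sym)
qed

fun msum :: "nat \<Rightarrow> (nat \<Rightarrow> complex mat) \<Rightarrow> nat \<Rightarrow> complex mat" where
  "msum d f 0 = 0\<^sub>m d d"
| "msum d f (Suc k) = msum d f k + f k"

lemma msum_carrier: "(\<And>k. k < K \<Longrightarrow> f k \<in> carrier_mat d d) \<Longrightarrow> msum d f K \<in> carrier_mat d d"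
  by (induction K) auto

lemma msum_entry: "(\<And>k. k < K \<Longrightarrow> f k \<in> carrier_mat d d) \<Longrightarrow> i < d \<Longrightarrow> j < d \<Longrightarrow>
   msum d f K $$ (i,j) = (\<Sum>k<K. f k $$ (i,j))"
proof (induction K)
  case 0 then show ?case by simp
next
  case (Suc K)
  have c: "msum d f K \<in> carrier_mat d d" "f K \<in> carrier_mat d d" using Suc.prems msum_carrier[of K f d] by auto
  have ih: "msum d f K $$ (i,j) = (\<Sum>k<K. f k $$ (i,j))" using Suc.IH Suc.prems by simp
  show ?case using c ih Suc.prems(2,3) by (simp add: index_add_mat)
qed

lemma msum_cong: "(\<And>k. k < K \<Longrightarrow> f k = g k) \<Longrightarrow> msum d f K = msum d g K"
  by (induction K) auto

definition expand :: "nat \<Rightarrow> (nat \<Rightarrow> complex) \<Rightarrow> complex mat" where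
  "expand n u = mat (2^n) (2^n) (\<lambda>(i,j). \<Sum>x<4^n. u x * pauli_string n x $$ (i,j))"

lemma expand_dims[simp]: "dim_row (expand n u) = 2^n" "dim_col (expand n u) = 2^n"
  by (simp_all add: expand_def)

lemma expand_carrier[simp]: "expand n u \<in> carrier_mat (2^n) (2^n)"
  by (simp add: expand_def)

lemma expand_msum: "expand n u = msum (2^n) (\<lambda>x. u x \<cdot>\<^sub>m pauli_string n x) (4^n)"
proof (rule eq_matI)
  have c: "\<And>k. k < 4^n \<Longrightarrow> u k \<cdot>\<^sub>m pauli_string n k \<in> carrier_mat (2^n) (2^n)" by simp
  have mc: "msum (2^n) (\<lambda>x. u x \<cdot>\<^sub>m pauli_string n x) (4^n) \<in> carrier_mat (2^n) (2^n)"
    by (rule msum_carrier) simp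
  show "dim_row (expand n u) = dim_row (msum (2^n) (\<lambda>x. u x \<cdot>\<^sub>m pauli_string n x) (4^n))"
       "dim_col (expand n u) = dim_col (msum (2^n) (\<lambda>x. u x \<cdot>\<^sub>m pauli_string n x) (4^n))"
    using mc by auto
  fix i j assume "i < dim_row (msum (2^n) (\<lambda>x. u x \<cdot>\<^sub>m pauli_string n x) (4^n))"
     "j < dim_col (msum (2^n) (\<lambda>x. u x \<cdot>\<^sub>m pauli_string n x) (4^n))"
  then have ij: "i < 2^n" "j < 2^n" using mc by auto
  show "expand n u $$ (i,j) = msum (2^n) (\<lambda>x. u x \<cdot>\<^sub>m pauli_string n x) (4^n) $$ (i,j)"
    using msum_entry[OF c ij] ij by (simp add: expand_def)
qed

lemma expand_complete: assumes "A \<in> carrier_mat (2^n) (2^n)" shows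
   "A = expand n (\<lambda>x. mtrace (pauli_string n x * A) / 2^n)"
proof (rule eq_matI)
  fix i j assume "i < dim_row (expand n (\<lambda>x. mtrace (pauli_string n x * A) / 2^n))"
     "j < dim_col (expand n (\<lambda>x. mtrace (pauli_string n x * A) / 2^n))"
  then have ij: "i < 2^n" "j < 2^n" by (auto simp: expand_def)
  have "A $$ (i,j) = (\<Sum>x<4^n. mtrace (pauli_string n x * A) / 2^n * pauli_string n x $$ (i,j))"
    by (rule pauli_complete[OF assms ij])
  then show "A $$ (i,j) = expand n (\<lambda>x. mtrace (pauli_string n x * A) / 2^n) $$ (i,j)"
    using ij by (simp add: expand_def)
qed (use assms in \<open>auto simp: expand_def\<close>)

section \<open>channels\<close>

lemma qc_carrier: "quantum_channel a b \<Phi> \<Longrightarrow> A \<in> carrier_mat (2^a) (2^a) \<Longrightarrow> \<Phi> A \<in> carrier_mat (2^b) (2^b)"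
  unfolding quantum_channel_def by blast

lemma qc_zero: assumes "quantum_channel a b \<Phi>" shows "\<Phi> (0\<^sub>m (2^a) (2^a)) = 0\<^sub>m (2^b) (2^b)"
proof -
  have z: "0\<^sub>m (2^a) (2^a) = (0::complex) \<cdot>\<^sub>m 0\<^sub>m (2^a) (2^a)" by auto
  have c: "\<Phi> (0\<^sub>m (2^a) (2^a)) \<in> carrier_mat (2^b) (2^b)" using qc_carrier[OF assms] by simp
  have "\<Phi> (0\<^sub>m (2^a) (2^a)) = 0 \<cdot>\<^sub>m \<Phi> (0\<^sub>m (2^a) (2^a))"
    using assms unfolding quantum_channel_def by (metis z zero_carrier_mat)
  also have "\<dots> = 0\<^sub>m (2^b) (2^b)" using c by auto
  finally show ?thesis .
qed

lemma qc_msum: assumes "quantum_channel a b \<Phi>" "\<And>k. k < K \<Longrightarrow> f k \<in> carrier_mat (2^a) (2^a)"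
  shows "\<Phi> (msum (2^a) f K) = msum (2^b) (\<lambda>k. \<Phi> (f k)) K"
  using assms(2)
proof (induction K)
  case 0 then show ?case using qc_zero[OF assms(1)] by simp
next
  case (Suc K)
  have c: "msum (2^a) f K \<in> carrier_mat (2^a) (2^a)" "f K \<in> carrier_mat (2^a) (2^a)"
    using Suc.prems msum_carrier[of K f] by auto
  have "\<Phi> (msum (2^a) f (Suc K)) = \<Phi> (msum (2^a) f K) + \<Phi> (f K)"
    using assms(1) c unfolding quantum_channel_def by simp
  then show ?case using Suc by simp
qed

lemma qc_smult: "quantum_channel a b \<Phi> \<Longrightarrow> A \<in> carrier_mat (2^a) (2^a) \<Longrightarrow> \<Phi> (c \<cdot>\<^sub>m A) = c \<cdot>\<^sub>m \<Phi> A"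
  unfolding quantum_channel_def by blast

lemma rep_mat_entry: "z < 4^b \<Longrightarrow> x < 4^a \<Longrightarrow>
   rep_mat a b \<Phi> $$ (z,x) = mtrace (pauli_string b z * \<Phi> (pauli_string a x)) / 2^b"
  by (simp add: rep_mat_def)

lemma rep_mat_dims[simp]: "dim_row (rep_mat a b \<Phi>) = 4^b" "dim_col (rep_mat a b \<Phi>) = 4^a"
  by (simp_all add: rep_mat_def)

lemma qc_expand: assumes qc: "quantum_channel a b \<Phi>"
  shows "\<Phi> (expand a u) = expand b (\<lambda>z. \<Sum>x<4^a. rep_mat a b \<Phi> $$ (z,x) * u x)"
proof -
  have c: "\<And>k. k < 4^a \<Longrightarrow> u k \<cdot>\<^sub>m pauli_string a k \<in> carrier_mat (2^a) (2^a)" by simp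
  have e: "\<Phi> (expand a u) = msum (2^b) (\<lambda>x. u x \<cdot>\<^sub>m \<Phi> (pauli_string a x)) (4^a)"
  proof -
    have "\<Phi> (expand a u) = msum (2^b) (\<lambda>x. \<Phi> (u x \<cdot>\<^sub>m pauli_string a x)) (4^a)"
      unfolding expand_msum by (rule qc_msum[OF qc c])
    also have "\<dots> = msum (2^b) (\<lambda>x. u x \<cdot>\<^sub>m \<Phi> (pauli_string a x)) (4^a)"
      by (rule msum_cong) (simp add: qc_smult[OF qc])
    finally show ?thesis .
  qed
  have c2: "\<And>k. k < 4^a \<Longrightarrow> u k \<cdot>\<^sub>m \<Phi> (pauli_string a k) \<in> carrier_mat (2^b) (2^b)"
    using qc_carrier[OF qc] by simp
  show ?thesis
  proof (rule eq_matI)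
    show "dim_row (\<Phi> (expand a u)) = dim_row (expand b (\<lambda>z. \<Sum>x<4^a. rep_mat a b \<Phi> $$ (z,x) * u x))"
         "dim_col (\<Phi> (expand a u)) = dim_col (expand b (\<lambda>z. \<Sum>x<4^a. rep_mat a b \<Phi> $$ (z,x) * u x))"
      using qc_carrier[OF qc expand_carrier] by auto
    fix i j assume "i < dim_row (expand b (\<lambda>z. \<Sum>x<4^a. rep_mat a b \<Phi> $$ (z,x) * u x))"
      "j < dim_col (expand b (\<lambda>z. \<Sum>x<4^a. rep_mat a b \<Phi> $$ (z,x) * u x))"
    then have ij: "i < 2^b" "j < 2^b" by (auto simp: expand_def)
    have "\<Phi> (expand a u) $$ (i,j) = (\<Sum>x<4^a. u x * \<Phi> (pauli_string a x) $$ (i,j))"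
    proof -
      have "\<Phi> (expand a u) $$ (i,j) = (\<Sum>x<4^a. (u x \<cdot>\<^sub>m \<Phi> (pauli_string a x)) $$ (i,j))"
        unfolding e by (rule msum_entry[OF c2 ij])
      also have "\<dots> = (\<Sum>x<4^a. u x * \<Phi> (pauli_string a x) $$ (i,j))"
      proof (rule sum.cong[OF refl])
        fix x :: nat assume "x \<in> {..<4^a}"
        then have "\<Phi> (pauli_string a x) \<in> carrier_mat (2^b) (2^b)" using qc_carrier[OF qc] by simp
        then show "(u x \<cdot>\<^sub>m \<Phi> (pauli_string a x)) $$ (i,j) = u x * \<Phi> (pauli_string a x) $$ (i,j)"
          using ij by simp
      qed
      finally show ?thesis .
    qed
    also have "\<dots> = (\<Sum>x<4^a. u x * (\<Sum>z<4^b. rep_mat a b \<Phi> $$ (z,x) * pauli_string b z $$ (i,j)))"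
    proof (rule sum.cong[OF refl])
      fix x :: nat assume x: "x \<in> {..<4^a}"
      have "\<Phi> (pauli_string a x) $$ (i,j) = (\<Sum>z<4^b. mtrace (pauli_string b z * \<Phi> (pauli_string a x)) / 2^b
          * pauli_string b z $$ (i,j))"
        by (rule pauli_complete[OF qc_carrier[OF qc ps_carrier] ij])
      also have "\<dots> = (\<Sum>z<4^b. rep_mat a b \<Phi> $$ (z,x) * pauli_string b z $$ (i,j))"
        using x by (intro sum.cong refl) (simp add: rep_mat_entry)
      finally show "u x * \<Phi> (pauli_string a x) $$ (i,j) = u x * (\<Sum>z<4^b. rep_mat a b \<Phi> $$ (z,x) * pauli_string b z $$ (i,j))"
        by simp
    qed
    also have "\<dots> = (\<Sum>z<4^b. (\<Sum>x<4^a. rep_mat a b \<Phi> $$ (z,x) * u x) * pauli_string b z $$ (i,j))"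
      by (simp add: sum_distrib_left sum_distrib_right mult_ac sum.swap[of _ "{..<4^b}"])
    also have "\<dots> = expand b (\<lambda>z. \<Sum>x<4^a. rep_mat a b \<Phi> $$ (z,x) * u x) $$ (i,j)"
      using ij by (simp add: expand_def)
    finally show "\<Phi> (expand a u) $$ (i,j) = expand b (\<lambda>z. \<Sum>x<4^a. rep_mat a b \<Phi> $$ (z,x) * u x) $$ (i,j)" .
  qed
qed

lemma circuit_map_take_Suc: "t < length Cs \<Longrightarrow>
  circuit_map (take (Suc t) Cs) = (Cs ! t) \<circ> circuit_map (take t Cs)"
  by (simp add: circuit_map_def take_Suc_conv_app_nth)

fun wl :: "(complex mat \<Rightarrow> complex mat) list \<Rightarrow> nat list \<Rightarrow> nat \<Rightarrow> (nat \<Rightarrow> complex) \<Rightarrow> nat \<Rightarrow> complex" where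
  "wl Cs ns 0 u = u"
| "wl Cs ns (Suc t) u = (\<lambda>z. \<Sum>x<4^(ns!t). rep_mat (ns!t) (ns!Suc t) (Cs!t) $$ (z,x) * wl Cs ns t u x)"

lemma chain: assumes "Cs \<in> circuits l ns" "t \<le> l"
  shows "circuit_map (take t Cs) (expand (ns!0) u) = expand (ns!t) (wl Cs ns t u)"
  using assms(2)
proof (induction t)
  case 0 then show ?case by (simp add: circuit_map_def)
next
  case (Suc t)
  have len: "length Cs = l" and qc: "quantum_channel (ns!t) (ns!Suc t) (Cs!t)"
    using assms(1) Suc.prems unfolding circuits_def by auto
  have "circuit_map (take (Suc t) Cs) (expand (ns!0) u) = (Cs!t) (expand (ns!t) (wl Cs ns t u))"
    using Suc circuit_map_take_Suc[of t Cs] len by simp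
  also have "\<dots> = expand (ns!Suc t) (wl Cs ns (Suc t) u)"
    by (simp add: qc_expand[OF qc])
  finally show ?case .
qed

lemma mtrace_expand: assumes "H \<in> carrier_mat (2^n) (2^n)"
  shows "mtrace (expand n w * H) = (\<Sum>z<4^n. w z * mtrace (pauli_string n z * H))"
proof -
  have "mtrace (expand n w * H) = (\<Sum>i<2^n. \<Sum>j<2^n. expand n w $$ (i,j) * H $$ (j,i))"
    by (rule mtrace_mult[OF expand_carrier assms])
  also have "\<dots> = (\<Sum>i<2^n. \<Sum>j<2^n. \<Sum>z<4^n. w z * (pauli_string n z $$ (i,j) * H $$ (j,i)))"
    by (simp add: expand_def sum_distrib_left sum_distrib_right mult_ac)
  also have "\<dots> = (\<Sum>z<4^n. w z * (\<Sum>i<2^n. \<Sum>j<2^n. pauli_string n z $$ (i,j) * H $$ (j,i)))"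
    by (simp add: sum_distrib_left sum.swap[of _ "{..<4^n}"])
  also have "\<dots> = (\<Sum>z<4^n. w z * mtrace (pauli_string n z * H))"
    using mtrace_mult[OF ps_carrier assms] by simp
  finally show ?thesis .
qed

lemma pure_carrier: "pure_state n \<rho> \<Longrightarrow> \<rho> \<in> carrier_mat (2^n) (2^n)"
  unfolding pure_state_def by auto

lemma model_fun_eq: assumes "Cs \<in> circuits l ns" "length ns = l + 1" "pure_state (ns!0) (\<rho> x)"
  "H \<in> carrier_mat (2^(ns!l)) (2^(ns!l))"
  shows "model_fun \<rho> H Cs x = Re (\<Sum>z<4^(ns!l). alpha_vec (ns!l) H z * wl Cs ns l (fI_vec (ns!0) (\<rho> x)) z)"
proof -
  have len: "length Cs = l" using assms(1) by (simp add: circuits_def)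
  have r: "\<rho> x = expand (ns!0) (fI_vec (ns!0) (\<rho> x))"
    unfolding fI_vec_def by (rule expand_complete[OF pure_carrier[OF assms(3)]])
  have "circuit_map Cs (\<rho> x) = expand (ns!l) (wl Cs ns l (fI_vec (ns!0) (\<rho> x)))"
    using chain[OF assms(1) order_refl, of "fI_vec (ns!0) (\<rho> x)"] len r by simp
  then show ?thesis
    unfolding model_fun_def using mtrace_expand[OF assms(4)]
    by (simp add: alpha_vec_def mult_ac)
qed

lemma wl_linear: "wl Cs ns t (\<lambda>z. \<Sum>i<m. c i * u i z) = (\<lambda>z. \<Sum>i<m. c i * wl Cs ns t (u i) z)"
proof (induction t)
  case 0 then show ?case by simp
next
  case (Suc t)
  show ?case
  proof (rule ext)
    fix z
    let ?M = "rep_mat (ns ! t) (ns ! Suc t) (Cs ! t)"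
    have "(\<Sum>x<4^(ns!t). ?M $$ (z,x) * (\<Sum>i<m. c i * wl Cs ns t (u i) x))
       = (\<Sum>x<4^(ns!t). \<Sum>i<m. c i * (?M $$ (z,x) * wl Cs ns t (u i) x))"
      by (simp add: sum_distrib_left sum_distrib_right mult_ac)
    also have "\<dots> = (\<Sum>i<m. \<Sum>x<4^(ns!t). c i * (?M $$ (z,x) * wl Cs ns t (u i) x))"
      by (rule sum.swap)
    also have "\<dots> = (\<Sum>i<m. c i * (\<Sum>x<4^(ns!t). ?M $$ (z,x) * wl Cs ns t (u i) x))"
      by (simp add: sum_distrib_left)
    finally show "wl Cs ns (Suc t) (\<lambda>z. \<Sum>i<m. c i * u i z) z = (\<Sum>i<m. c i * wl Cs ns (Suc t) (u i) z)"
      by (simp add: Suc)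
  qed
qed

lemma fI_real: assumes "pure_state n \<rho>" shows "Im (fI_vec n \<rho> z) = 0"
proof -
  obtain v where v: "v \<in> carrier_vec (2^n)" "\<rho> = mat (2^n) (2^n) (\<lambda>(i,j). v $ i * cnj (v $ j))"
    using assms unfolding pure_state_def by auto
  have c: "\<rho> \<in> carrier_mat (2^n) (2^n)" using v by simp
  have t: "mtrace (pauli_string n z * \<rho>) = (\<Sum>i<2^n. \<Sum>j<2^n. pauli_string n z $$ (i,j) * (v $ j * cnj (v $ i)))"
    using mtrace_mult[OF ps_carrier c] v by simp
  have "cnj (mtrace (pauli_string n z * \<rho>)) = (\<Sum>i<2^n. \<Sum>j<2^n. pauli_string n z $$ (j,i) * (v $ i * cnj (v $ j)))"
    unfolding t by (simp add: ps_herm mult_ac)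
  also have "\<dots> = mtrace (pauli_string n z * \<rho>)"
    unfolding t by (rule sum.swap)
  finally have "Im (mtrace (pauli_string n z * \<rho>)) = 0"
    by (metis Reals_cnj_iff complex_is_Real_iff)
  then show ?thesis by (simp add: fI_vec_def)
qed

lemma powr_sum_zero_iff:
  fixes a :: "'i \<Rightarrow> real"
  assumes "finite I" "\<And>i. i \<in> I \<Longrightarrow> a i \<ge> 0" "p > 0"
  shows "(\<Sum>i\<in>I. a i powr p) = 0 \<longleftrightarrow> (\<forall>i\<in>I. a i = 0)"
  using assms by (simp add: sum_nonneg_eq_0_iff)

lemma holder:
  fixes a b :: "'i \<Rightarrow> real"
  assumes I: "finite I" and ab: "\<And>i. i \<in> I \<Longrightarrow> a i \<ge> 0" "\<And>i. i \<in> I \<Longrightarrow> b i \<ge> 0"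
    and pq: "p > 1" "q > 1" "1/p + 1/q = 1"
  shows "(\<Sum>i\<in>I. a i * b i) \<le> (\<Sum>i\<in>I. a i powr p) powr (1/p) * (\<Sum>i\<in>I. b i powr q) powr (1/q)"
proof -
  define SA where "SA = (\<Sum>i\<in>I. a i powr p)"
  define SB where "SB = (\<Sum>i\<in>I. b i powr q)"
  have SA0: "SA \<ge> 0" "SB \<ge> 0" unfolding SA_def SB_def by (auto intro: sum_nonneg)
  show ?thesis
  proof (cases "SA = 0 \<or> SB = 0")
    case True
    then have "(\<forall>i\<in>I. a i = 0) \<or> (\<forall>i\<in>I. b i = 0)"
      using powr_sum_zero_iff[OF I ab(1), where p=p] powr_sum_zero_iff[OF I ab(2), where p=q] pq
      unfolding SA_def SB_def by auto
    then have "(\<Sum>i\<in>I. a i * b i) = 0" by auto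
    then show ?thesis using SA0 unfolding SA_def SB_def by simp
  next
    case False
    then have pos: "SA > 0" "SB > 0" using SA0 by auto
    define A where "A = SA powr (1/p)"
    define B where "B = SB powr (1/q)"
    have AB: "A > 0" "B > 0" using pos by (auto simp: A_def B_def)
    have Ap: "A powr p = SA" using pos pq by (simp add: A_def powr_powr)
    have Bq: "B powr q = SB" using pos pq by (simp add: B_def powr_powr)
    have "(\<Sum>i\<in>I. (a i / A) * (b i / B)) \<le> (\<Sum>i\<in>I. (a i / A) powr p / p + (b i / B) powr q / q)"
      using ab AB pq by (intro sum_mono Youngs_inequality) auto
    also have "\<dots> = (\<Sum>i\<in>I. a i powr p) / A powr p / p + (\<Sum>i\<in>I. b i powr q) / B powr q / q"
      using ab AB by (simp add: sum.distrib powr_divide sum_divide_distrib)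
    also have "\<dots> = 1" using pos pq unfolding Ap Bq SA_def[symmetric] SB_def[symmetric] by simp
    finally have "(\<Sum>i\<in>I. a i * b i) / (A * B) \<le> 1"
      by (simp add: sum_divide_distrib mult_ac)
    then have "(\<Sum>i\<in>I. a i * b i) \<le> A * B" using AB by (simp add: divide_le_eq)
    then show ?thesis unfolding A_def B_def SA_def SB_def .
  qed
qed

lemma jensen_pow:
  fixes y :: "'i \<Rightarrow> real"
  assumes I: "finite I" "I \<noteq> {}" and y: "\<And>i. i \<in> I \<Longrightarrow> y i \<ge> 0" and p: "p \<ge> 1"
  shows "((\<Sum>i\<in>I. y i) / card I) powr p \<le> (\<Sum>i\<in>I. y i powr p) / card I"
proof (cases "p = 1")
  case True then show ?thesis using y by (simp add: sum_nonneg)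
next
  case False
  then have p1: "p > 1" using p by simp
  define q where "q = p / (p - 1)"
  have q: "q > 1" "1/p + 1/q = 1" using p1 by (auto simp: q_def field_simps)
  define w where "w = 1 / real (card I)"
  have w: "w > 0" using I by (simp add: w_def card_gt_0_iff)
  have ww: "w powr (1/q) * w powr (1/p) = w"
  proof -
    have "w powr (1/q) * w powr (1/p) = w powr (1/q + 1/p)" by (rule powr_add[symmetric])
    also have "1/q + 1/p = 1" using q(2) by linarith
    finally show ?thesis using w by simp
  qed
  have "(\<Sum>i\<in>I. y i) / card I = (\<Sum>i\<in>I. w * y i)"
    by (simp add: w_def sum_divide_distrib)
  also have "\<dots> = (\<Sum>i\<in>I. w powr (1/q) * (w powr (1/p) * y i))"
  proof (rule sum.cong[OF refl])
    fix i show "w * y i = w powr (1/q) * (w powr (1/p) * y i)"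
      by (simp only: mult.assoc[symmetric] ww)
  qed
  also have "\<dots> \<le> (\<Sum>i\<in>I. (w powr (1/q)) powr q) powr (1/q) * (\<Sum>i\<in>I. (w powr (1/p) * y i) powr p) powr (1/p)"
  proof (rule holder[OF I(1)])
    show "1/q + 1/p = 1" using q(2) by linarith
  qed (use y q p1 w in auto)
  also have "(\<Sum>i\<in>I. (w powr (1/q)) powr q) = 1"
  proof -
    have "(w powr (1/q)) powr q = w" using w q by (simp add: powr_powr)
    then have "(\<Sum>i\<in>I. (w powr (1/q)) powr q) = card I * w" by simp
    then show ?thesis using I by (simp add: w_def)
  qed
  also have "(\<Sum>i\<in>I. (w powr (1/p) * y i) powr p) = (\<Sum>i\<in>I. y i powr p) / card I"
  proof -
    have "(w powr (1/p) * y i) powr p = w * y i powr p" if "i \<in> I" for i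
      using w p1 y[OF that] by (simp add: powr_mult powr_powr)
    then have "(\<Sum>i\<in>I. (w powr (1/p) * y i) powr p) = (\<Sum>i\<in>I. w * y i powr p)" by simp
    then show ?thesis by (simp add: w_def sum_divide_distrib)
  qed
  finally have le: "(\<Sum>i\<in>I. y i) / card I \<le> ((\<Sum>i\<in>I. y i powr p) / card I) powr (1/p)" by simp
  have nn: "(\<Sum>i\<in>I. y i) / card I \<ge> 0" using y by (simp add: sum_nonneg)
  have "((\<Sum>i\<in>I. y i) / card I) powr p \<le> (((\<Sum>i\<in>I. y i powr p) / card I) powr (1/p)) powr p"
    by (rule powr_mono2) (use le nn p1 in auto)
  also have "\<dots> = (\<Sum>i\<in>I. y i powr p) / card I"
    using p1 by (simp add: powr_powr sum_nonneg)
  finally show ?thesis .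
qed

lemma lmono:
  fixes x :: "'i \<Rightarrow> real"
  assumes I: "finite I" and x: "\<And>i. i \<in> I \<Longrightarrow> x i \<ge> 0" and ab: "0 < a" "a \<le> b"
  shows "(\<Sum>i\<in>I. x i powr b) powr (1/b) \<le> (\<Sum>i\<in>I. x i powr a) powr (1/a)"
proof -
  define S where "S = (\<Sum>i\<in>I. x i powr a)"
  have S0: "S \<ge> 0" unfolding S_def by (auto intro: sum_nonneg)
  show ?thesis
  proof (cases "S = 0")
    case True
    then have "\<forall>i\<in>I. x i = 0" using powr_sum_zero_iff[OF I x, where p=a] ab unfolding S_def by auto
    then show ?thesis by simp
  next
    case False
    then have Sp: "S > 0" using S0 by simp
    define T where "T = S powr (1/a)"
    have T: "T > 0" using Sp by (simp add: T_def)
    have xT: "x i \<le> T" if i: "i \<in> I" for i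
    proof -
      have "x i powr a \<le> S" unfolding S_def using I i x by (intro member_le_sum) auto
      then have "(x i powr a) powr (1/a) \<le> S powr (1/a)" using x[OF i] ab by (intro powr_mono2) auto
      then show ?thesis using x[OF i] ab by (simp add: powr_powr T_def)
    qed
    have "x i powr b \<le> x i powr a * T powr (b - a)" if i: "i \<in> I" for i
    proof (cases "x i = 0")
      case True then show ?thesis using ab by simp
    next
      case False
      then have xp: "x i > 0" using x[OF i] by simp
      have "x i powr b = x i powr a * x i powr (b - a)" using xp by (simp add: powr_add[symmetric])
      also have "\<dots> \<le> x i powr a * T powr (b - a)"
        using xT[OF i] xp ab by (intro mult_left_mono powr_mono2) auto
      finally show ?thesis .
    qed
    then have "(\<Sum>i\<in>I. x i powr b) \<le> (\<Sum>i\<in>I. x i powr a * T powr (b - a))" by (rule sum_mono)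
    also have "\<dots> = S * T powr (b - a)" by (simp add: S_def sum_distrib_right)
    also have "S = T powr a" using Sp ab by (simp add: T_def powr_powr)
    also have "T powr a * T powr (b - a) = T powr b" using T by (simp add: powr_add[symmetric])
    finally have le: "(\<Sum>i\<in>I. x i powr b) \<le> T powr b" .
    have "(\<Sum>i\<in>I. x i powr b) powr (1/b) \<le> (T powr b) powr (1/b)"
      using le ab x by (intro powr_mono2) (auto intro: sum_nonneg)
    also have "\<dots> = T" using T ab by (simp add: powr_powr)
    finally show ?thesis by (simp add: T_def S_def)
  qed
qed

lemma pmean:
  fixes x :: "'i \<Rightarrow> real"
  assumes I: "finite I" "I \<noteq> {}" and x: "\<And>i. i \<in> I \<Longrightarrow> x i \<ge> 0" and ab: "0 < a" "a \<le> b"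
  shows "((\<Sum>i\<in>I. x i powr a) / card I) powr (1/a) \<le> ((\<Sum>i\<in>I. x i powr b) / card I) powr (1/b)"
proof -
  have "((\<Sum>i\<in>I. x i powr a) / card I) powr (b/a) \<le> (\<Sum>i\<in>I. (x i powr a) powr (b/a)) / card I"
    using ab x by (intro jensen_pow[OF I]) auto
  also have "(\<Sum>i\<in>I. (x i powr a) powr (b/a)) = (\<Sum>i\<in>I. x i powr b)"
    using ab by (simp add: powr_powr)
  finally have le: "((\<Sum>i\<in>I. x i powr a) / card I) powr (b/a) \<le> (\<Sum>i\<in>I. x i powr b) / card I" .
  have nn: "(\<Sum>i\<in>I. x i powr a) / card I \<ge> 0" by (intro divide_nonneg_nonneg sum_nonneg) auto
  have "(((\<Sum>i\<in>I. x i powr a) / card I) powr (b/a)) powr (1/b) \<le> ((\<Sum>i\<in>I. x i powr b) / card I) powr (1/b)"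
    using le ab by (intro powr_mono2) auto
  then show ?thesis using ab nn by (simp add: powr_powr)
qed

lemma maxle:
  fixes x :: "'i \<Rightarrow> real"
  assumes I: "finite I" and x: "\<And>i. i \<in> I \<Longrightarrow> x i \<ge> 0" and a: "0 < a" and j: "j \<in> I"
  shows "x j \<le> (\<Sum>i\<in>I. x i powr a) powr (1/a)"
proof -
  have "x j powr a \<le> (\<Sum>i\<in>I. x i powr a)" using I j x by (intro member_le_sum) auto
  then have "(x j powr a) powr (1/a) \<le> (\<Sum>i\<in>I. x i powr a) powr (1/a)"
    using x[OF j] a by (intro powr_mono2) auto
  then show ?thesis using x[OF j] a by (simp add: powr_powr)
qed

lemma sum_le_max:
  fixes x :: "'i \<Rightarrow> real"
  assumes I: "finite I" and x: "\<And>i. i \<in> I \<Longrightarrow> 0 \<le> x i \<and> x i \<le> M" and a: "0 < a"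
  shows "(\<Sum>i\<in>I. x i powr a) powr (1/a) \<le> card I powr (1/a) * M"
proof -
  have M: "M \<ge> 0" if "I \<noteq> {}" using x that by force
  have "(\<Sum>i\<in>I. x i powr a) \<le> (\<Sum>i\<in>I. M powr a)" using x a by (intro sum_mono powr_mono2) auto
  also have "\<dots> = card I * M powr a" by simp
  finally have le: "(\<Sum>i\<in>I. x i powr a) \<le> card I * M powr a" .
  show ?thesis
  proof (cases "I = {}")
    case True then show ?thesis by simp
  next
    case False
    have "(\<Sum>i\<in>I. x i powr a) powr (1/a) \<le> (card I * M powr a) powr (1/a)"
      using le a x by (intro powr_mono2) (auto intro: sum_nonneg)
    also have "\<dots> = card I powr (1/a) * M" using M[OF False] a by (simp add: powr_mult powr_powr)
    finally show ?thesis .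
  qed
qed

lemma rows_to_group:
  fixes r :: "nat \<Rightarrow> real"
  assumes N: "N > 0" and r: "\<And>z. z < N \<Longrightarrow> r z \<ge> 0" and s: "s \<ge> 1" and q: "q > 0"
  shows "(\<Sum>z<N. r z powr s) powr (1/s) \<le> N powr (max (1/s) (1/q)) * ((1/N) * (\<Sum>z<N. r z powr q)) powr (1/q)"
proof (cases "s \<ge> q")
  case True
  have "(\<Sum>z<N. r z powr s) powr (1/s) \<le> (\<Sum>z<N. r z powr q) powr (1/q)"
    using r q True by (intro lmono) auto
  also have "\<dots> = N powr (1/q) * ((1/N) * (\<Sum>z<N. r z powr q)) powr (1/q)"
    using N by (simp add: powr_mult powr_divide sum_nonneg r)
  also have "\<dots> \<le> N powr (max (1/s) (1/q)) * ((1/N) * (\<Sum>z<N. r z powr q)) powr (1/q)"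
    using N by (intro mult_right_mono powr_mono) auto
  finally show ?thesis .
next
  case False
  have pm: "((\<Sum>z<N. r z powr s) / card {..<N}) powr (1/s) \<le> ((\<Sum>z<N. r z powr q) / card {..<N}) powr (1/q)"
    using N r s False by (intro pmean) auto
  then have pm': "((1/N) * (\<Sum>z<N. r z powr s)) powr (1/s) \<le> ((1/N) * (\<Sum>z<N. r z powr q)) powr (1/q)"
    by simp
  have "(\<Sum>z<N. r z powr s) powr (1/s) = N powr (1/s) * ((1/N) * (\<Sum>z<N. r z powr s)) powr (1/s)"
    using N s by (simp add: powr_mult powr_divide sum_nonneg r)
  also have "\<dots> \<le> N powr (1/s) * ((1/N) * (\<Sum>z<N. r z powr q)) powr (1/q)"
    using pm' by (intro mult_left_mono) auto
  also have "\<dots> \<le> N powr (max (1/s) (1/q)) * ((1/N) * (\<Sum>z<N. r z powr q)) powr (1/q)"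
    using N by (intro mult_right_mono powr_mono) auto
  finally show ?thesis .
qed

lemma lnorm_fin: "lnorm n v (ereal p) = (\<Sum>i<n. cmod (v i) powr p) powr (1/p)"
  by (simp add: lnorm_def)

lemma lnorm_inf: "lnorm n v \<infinity> = Max ((\<lambda>i. cmod (v i)) ` {..<n})"
  by (simp add: lnorm_def)

lemma hconj_1: "hconj 1 = \<infinity>" by (simp add: hconj_def)
lemma hconj_gt1: "p > 1 \<Longrightarrow> hconj p = ereal (p/(p-1))" by (simp add: hconj_def)

lemma Max_img_le: "(n::nat) > 0 \<Longrightarrow> (\<And>i. i < n \<Longrightarrow> f i \<le> B) \<Longrightarrow> Max (f ` {..<n}) \<le> (B::real)"
proof -
  assume a: "n > 0" "\<And>i. i < n \<Longrightarrow> f i \<le> B"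
  have "finite (f ` {..<n})" "f ` {..<n} \<noteq> {}" using a by auto
  then show ?thesis using a by (auto simp: Max_le_iff)
qed

lemma le_Max_img: "i < n \<Longrightarrow> f i \<le> Max (f ` {..<n::nat}) " 
  by (rule Max_ge) auto

lemma lnorm_nonneg: "n > 0 \<Longrightarrow> lnorm n v r \<ge> 0"
  unfolding lnorm_def
  by (auto intro: order.trans[OF _ le_Max_img[of 0 n]])

lemma lnorm_entry_le_inf: "i < n \<Longrightarrow> cmod (v i) \<le> lnorm n v \<infinity>"
  unfolding lnorm_inf by (rule le_Max_img)

lemma holder_lnorm:
  assumes D: "D > 0" and p: "p \<ge> 1"
  shows "cmod (\<Sum>x<D. a x * b x) \<le> lnorm D a (ereal p) * lnorm D b (hconj p)"
proof -
  have "cmod (\<Sum>x<D. a x * b x) \<le> (\<Sum>x<D. cmod (a x) * cmod (b x))"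
    by (rule order.trans[OF norm_sum]) (simp add: norm_mult)
  also have "\<dots> \<le> lnorm D a (ereal p) * lnorm D b (hconj p)"
  proof (cases "p = 1")
    case True
    have "(\<Sum>x<D. cmod (a x) * cmod (b x)) \<le> (\<Sum>x<D. cmod (a x) * lnorm D b \<infinity>)"
      by (intro sum_mono mult_left_mono lnorm_entry_le_inf) auto
    also have "\<dots> = lnorm D a (ereal p) * lnorm D b (hconj p)"
      using True by (simp add: lnorm_fin hconj_1 sum_distrib_right sum_nonneg)
    finally show ?thesis .
  next
    case False
    then have p1: "p > 1" using p by simp
    have "(\<Sum>x<D. cmod (a x) * cmod (b x)) \<le>
      (\<Sum>x<D. cmod (a x) powr p) powr (1/p) * (\<Sum>x<D. cmod (b x) powr (p/(p-1))) powr (1/(p/(p-1)))"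
      using p1 by (intro holder) (auto simp: field_simps)
    also have "\<dots> = lnorm D a (ereal p) * lnorm D b (hconj p)"
      using p1 by (simp add: lnorm_fin hconj_gt1)
    finally show ?thesis .
  qed
  finally show ?thesis .
qed

lemma ereal_recip_fin: "ereal_recip (ereal q) = 1 / q" by (simp add: ereal_recip_def)
lemma ereal_recip_inf: "ereal_recip \<infinity> = 0" by (simp add: ereal_recip_def)

lemma layer_bound:
  fixes M :: "complex mat" and u :: "nat \<Rightarrow> complex"
  assumes N: "dim_row M > 0" and D: "dim_col M > 0" and p: "p \<ge> 1" and q: "q > 0"
  shows "lnorm (dim_row M) (\<lambda>z. \<Sum>x<dim_col M. M $$ (z,x) * u x) (hconj p) \<le>
    real (dim_row M) powr (max (1 - 1/p) (ereal_recip q)) * group_norm M p q * lnorm (dim_col M) u (hconj p)"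
proof -
  define N where "N = dim_row M"
  define D' where "D' = dim_col M"
  define r where "r z = lnorm D' (\<lambda>j. M $$ (z,j)) (ereal p)" for z
  define U where "U = lnorm D' u (hconj p)"
  define y where "y z = (\<Sum>x<D'. M $$ (z,x) * u x)" for z
  have N0: "N > 0" and D0: "D' > 0" using N D by (auto simp: N_def D'_def)
  have r0: "r z \<ge> 0" for z unfolding r_def using D0 by (rule lnorm_nonneg)
  have U0: "U \<ge> 0" unfolding U_def using D0 by (rule lnorm_nonneg)
  have y: "cmod (y z) \<le> r z * U" for z
    unfolding y_def r_def U_def by (rule holder_lnorm[OF D0 p])
  have gn: "group_norm M p q = (if q = \<infinity> then Max (r ` {..<N})
      else ((1 / real N) * (\<Sum>i<N. r i powr real_of_ereal q)) powr (1 / real_of_ereal q))"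
    unfolding group_norm_def r_def N_def D'_def Let_def by simp
  have goal: "lnorm N y (hconj p) \<le> real N powr (max (1 - 1/p) (ereal_recip q)) * group_norm M p q * U"
  proof (cases "p = 1")
    case True
    have "lnorm N y (hconj p) \<le> Max (r ` {..<N}) * U"
      unfolding True hconj_1 lnorm_inf
    proof (rule Max_img_le[OF N0])
      fix z assume "z < N"
      then have "r z \<le> Max (r ` {..<N})" by (rule le_Max_img)
      then show "cmod (y z) \<le> Max (r ` {..<N}) * U" using y[of z] U0 by (meson mult_right_mono order.trans)
    qed
    also have "Max (r ` {..<N}) \<le> real N powr (max (1 - 1/p) (ereal_recip q)) * group_norm M p q"
    proof (cases "q = \<infinity>")
      case True
      then show ?thesis using \<open>p = 1\<close> gn N0 by (simp add: ereal_recip_inf)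
    next
      case False
      then obtain q' where q': "q = ereal q'" "q' > 0" using q by (cases q) auto
      have "Max (r ` {..<N}) \<le> (\<Sum>i<N. r i powr q') powr (1/q')"
        using N0 r0 q' by (intro Max_img_le maxle) auto
      also have "\<dots> = real N powr (1/q') * ((1 / real N) * (\<Sum>i<N. r i powr q')) powr (1/q')"
        using N0 by (simp add: powr_mult powr_divide sum_nonneg r0)
      also have "\<dots> = real N powr (max (1 - 1/p) (ereal_recip q)) * group_norm M p q"
        using \<open>p = 1\<close> q' gn by (simp add: ereal_recip_fin max_def)
      finally show ?thesis .
    qed
    finally show ?thesis using U0 by (simp add: mult_right_mono)
  next
    case False
    then have p1: "p > 1" using p by simp
    define s where "s = p / (p - 1)"
    have s1: "s \<ge> 1" and s_inv: "1/s = 1 - 1/p" using p1 by (auto simp: s_def field_simps)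
    have A: "lnorm N y (hconj p) \<le> U * (\<Sum>z<N. r z powr s) powr (1/s)"
    proof -
      have "lnorm N y (hconj p) = (\<Sum>z<N. cmod (y z) powr s) powr (1/s)"
        using p1 by (simp add: hconj_gt1 lnorm_fin s_def)
      also have "\<dots> \<le> (\<Sum>z<N. (r z * U) powr s) powr (1/s)"
        using y s1 by (intro powr_mono2 sum_mono) (auto intro: sum_nonneg)
      also have "\<dots> = U * (\<Sum>z<N. r z powr s) powr (1/s)"
      proof -
        have "(\<Sum>z<N. (r z * U) powr s) = U powr s * (\<Sum>z<N. r z powr s)"
          using r0 U0 by (simp add: powr_mult sum_distrib_left mult_ac)
        then show ?thesis using U0 s1 by (simp add: powr_mult powr_powr sum_nonneg)
      qed
      finally show ?thesis .
    qed
    have B: "(\<Sum>z<N. r z powr s) powr (1/s) \<le> real N powr (max (1 - 1/p) (ereal_recip q)) * group_norm M p q"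
    proof (cases "q = \<infinity>")
      case True
      have "(\<Sum>z<N. r z powr s) powr (1/s) \<le> card {..<N} powr (1/s) * Max (r ` {..<N})"
        using r0 s1 by (intro sum_le_max) (auto intro: le_Max_img)
      then show ?thesis using True gn s_inv p1 by (simp add: ereal_recip_inf max_def)
    next
      case False
      then obtain q' where q': "q = ereal q'" "q' > 0" using q by (cases q) auto
      have "(\<Sum>z<N. r z powr s) powr (1/s) \<le> N powr (max (1/s) (1/q')) * ((1/N) * (\<Sum>z<N. r z powr q')) powr (1/q')"
        using N0 r0 s1 q' by (intro rows_to_group) auto
      then show ?thesis using q' gn s_inv by (simp add: ereal_recip_fin)
    qed
    have "lnorm N y (hconj p) \<le> U * (real N powr (max (1 - 1/p) (ereal_recip q)) * group_norm M p q)"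
      using A mult_left_mono[OF B U0] by linarith
    then show ?thesis by (simp add: mult_ac)
  qed
  then show ?thesis unfolding N_def D'_def U_def y_def by simp
qed

lemma group_norm_nonneg: assumes "dim_row M > 0" "dim_col M > 0" shows "group_norm M p q \<ge> 0"
proof -
  have r: "0 \<le> lnorm (dim_col M) (\<lambda>j. M $$ (i, j)) (ereal p)" for i using assms(2) by (rule lnorm_nonneg)
  show ?thesis unfolding group_norm_def Let_def
    using assms(1) r by (auto intro: order.trans[OF _ le_Max_img[of 0]])
qed

definition cfac :: "real \<Rightarrow> ereal \<Rightarrow> real" where
  "cfac p q = max (1 - 1/p) (ereal_recip q)"

lemma multilayer:
  assumes C: "Cs \<in> circuits l ns" and len: "length ns = l + 1" and ns: "\<forall>i\<le>l. ns ! i \<ge> 1"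
    and p: "p \<ge> 1" and q: "q > 0" and t: "t \<le> l"
  shows "lnorm (4^(ns!t)) (wl Cs ns t u) (hconj p) \<le>
     (\<Prod>i<t. real (4^(ns!Suc i)) powr cfac p q * group_norm (rep_mat (ns!i) (ns!Suc i) (Cs!i)) p q)
       * lnorm (4^(ns!0)) u (hconj p)"
  using t
proof (induction t)
  case 0 then show ?case by simp
next
  case (Suc t)
  let ?M = "rep_mat (ns!t) (ns!Suc t) (Cs!t)"
  have d: "dim_row ?M > 0" "dim_col ?M > 0" by simp_all
  have "lnorm (4^(ns!Suc t)) (wl Cs ns (Suc t) u) (hconj p) =
      lnorm (dim_row ?M) (\<lambda>z. \<Sum>x<dim_col ?M. ?M $$ (z,x) * wl Cs ns t u x) (hconj p)"
    by simp
  also have "\<dots> \<le> real (dim_row ?M) powr (max (1 - 1/p) (ereal_recip q)) * group_norm ?M p q * lnorm (dim_col ?M) (wl Cs ns t u) (hconj p)"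
    by (rule layer_bound[OF d p q])
  also have "\<dots> = real (4^(ns!Suc t)) powr cfac p q * group_norm ?M p q * lnorm (4^(ns!t)) (wl Cs ns t u) (hconj p)"
    by (simp add: cfac_def)
  also have "\<dots> \<le> real (4^(ns!Suc t)) powr cfac p q * group_norm ?M p q *
     ((\<Prod>i<t. real (4^(ns!Suc i)) powr cfac p q * group_norm (rep_mat (ns!i) (ns!Suc i) (Cs!i)) p q)
       * lnorm (4^(ns!0)) u (hconj p))"
    using Suc group_norm_nonneg[OF d] by (intro mult_left_mono) auto
  finally show ?case by (simp add: mult_ac)
qed

lemma prod_split_fac:
  "(\<Prod>i<l. real (4^(ns!Suc i)) powr c * g i) = 4 powr ((\<Sum>i\<in>{1..l}. real (ns ! i)) * c) * (\<Prod>i<l. g i)"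
proof (induction l)
  case 0 then show ?case by simp
next
  case (Suc l)
  have "real (4^(ns!Suc l)) powr c = 4 powr (real (ns ! Suc l) * c)"
    by (simp add: powr_realpow[symmetric] powr_powr)
  moreover have "4 powr ((\<Sum>i\<in>{1..Suc l}. real (ns ! i)) * c) = 4 powr ((\<Sum>i\<in>{1..l}. real (ns ! i)) * c) * 4 powr (real (ns ! Suc l) * c)"
    by (simp add: distrib_right powr_add)
  ultimately show ?case using Suc by (simp add: mult_ac)
qed

definition signs :: "nat \<Rightarrow> real list set" where
  "signs m = {es. length es = m \<and> set es \<subseteq> {-1, 1}}"

lemma signs_0: "signs 0 = {[]}" by (auto simp: signs_def)

lemma signs_Suc: "signs (Suc m) = (Cons 1) ` signs m \<union> (Cons (-1)) ` signs m"
proof (rule Set.set_eqI)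
  fix es show "es \<in> signs (Suc m) \<longleftrightarrow> es \<in> (Cons 1) ` signs m \<union> (Cons (-1)) ` signs m"
    by (cases es) (auto simp: signs_def)
qed

lemma signs_finite: "finite (signs m)"
  by (induction m) (auto simp: signs_0 signs_Suc)

lemma signs_sum_Suc: "(\<Sum>es\<in>signs (Suc m). F es) = (\<Sum>es\<in>signs m. F (1 # es) + F ((-1) # es))"
proof -
  have d: "(Cons 1) ` signs m \<inter> (Cons (-1)) ` signs m = {}" by auto
  have "(\<Sum>es\<in>signs (Suc m). F es) = (\<Sum>es\<in>(Cons 1) ` signs m. F es) + (\<Sum>es\<in>(Cons (-1)) ` signs m. F es)"
    unfolding signs_Suc by (rule sum.union_disjoint) (use signs_finite d in auto)
  also have "\<dots> = (\<Sum>es\<in>signs m. F (1 # es)) + (\<Sum>es\<in>signs m. F ((-1) # es))"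
    by (simp add: sum.reindex inj_on_def)
  finally show ?thesis by (simp add: sum.distrib)
qed

lemma signs_card: "card (signs m) = 2^m"
proof (induction m)
  case 0 then show ?case by (simp add: signs_0)
next
  case (Suc m)
  have "card (signs (Suc m)) = (\<Sum>es\<in>signs (Suc m). 1)" by simp
  also have "\<dots> = (\<Sum>es\<in>signs m. (1::nat) + 1)" by (rule signs_sum_Suc)
  also have "\<dots> = 2 * card (signs m)" by simp
  finally show ?case using Suc by simp
qed

lemma sum_even_part: fixes k :: nat shows "(\<Sum>i\<le>2*k. (if even i then g i else 0)) = (\<Sum>j\<le>k. g (2*j) :: real)"
proof (induction k)
  case 0 then show ?case by simp
next
  case (Suc k)
  have "2 * Suc k = Suc (Suc (2*k))" by simp
  then show ?case using Suc by (simp add: atMost_Suc)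
qed

lemma binom_even: "(y + a)^(2*k) + (y - a)^(2*k) = (\<Sum>j\<le>k. 2 * real ((2*k) choose (2*j)) * a^(2*j) * y^(2*k - 2*j))"
proof -
  have "(y + a)^(2*k) + (y - a)^(2*k) = (a + y)^(2*k) + ((-a) + y)^(2*k)" by (simp add: add.commute)
  also have "\<dots> = (\<Sum>i\<le>2*k. real ((2*k) choose i) * a^i * y^(2*k-i)) + (\<Sum>i\<le>2*k. real ((2*k) choose i) * (-a)^i * y^(2*k-i))"
    by (simp only: binomial_ring)
  also have "\<dots> = (\<Sum>i\<le>2*k. (if even i then 2 * real ((2*k) choose i) * a^i * y^(2*k-i) else 0))"
  proof -
    have "\<And>i. real ((2*k) choose i) * a^i * y^(2*k-i) + real ((2*k) choose i) * (-a)^i * y^(2*k-i)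
       = (if even i then 2 * real ((2*k) choose i) * a^i * y^(2*k-i) else 0)"
    proof -
      fix i show "real ((2*k) choose i) * a^i * y^(2*k-i) + real ((2*k) choose i) * (-a)^i * y^(2*k-i)
       = (if even i then 2 * real ((2*k) choose i) * a^i * y^(2*k-i) else 0)"
        by (cases "even i") (simp_all add: power_minus')
    qed
    then show ?thesis by (simp only: sum.distrib[symmetric])
  qed
  also have "\<dots> = (\<Sum>j\<le>k. 2 * real ((2*k) choose (2*j)) * a^(2*j) * y^(2*k - 2*j))"
    by (rule sum_even_part)
  finally show ?thesis .
qed


fun dfact :: "nat \<Rightarrow> real" where
  "dfact 0 = 1"
| "dfact (Suc k) = (2 * real k + 1) * dfact k"

lemma dfact_pos: "dfact k > 0"
  by (induction k) auto

lemma dfact_fact: "dfact k * 2^k * fact k = fact (2*k)"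
proof (induction k)
  case 0 then show ?case by simp
next
  case (Suc k)
  have e: "2 * Suc k = Suc (Suc (2*k))" by simp
  have "dfact (Suc k) * 2^Suc k * fact (Suc k) = (2 * real k + 1) * (2 * real k + 2) * (dfact k * 2^k * fact k)"
    by (simp add: algebra_simps)
  also have "\<dots> = fact (2 * Suc k)" unfolding Suc e by (simp add: algebra_simps)
  finally show ?case .
qed

lemma pow2fact: "(2::real)^j * fact j \<le> fact (2*j)"
proof (induction j)
  case 0 then show ?case by simp
next
  case (Suc j)
  have e: "2 * Suc j = Suc (Suc (2*j))" by simp
  have "(2::real)^Suc j * fact (Suc j) = (2 * real j + 2) * (2^j * fact j)" by (simp add: algebra_simps)
  also have "\<dots> \<le> (2 * real j + 2) * fact (2*j)" using Suc by (intro mult_left_mono) auto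
  also have "\<dots> \<le> (2 * real j + 2) * (2 * real j + 1) * fact (2*j)" by (simp add: mult_right_mono)
  also have "\<dots> = fact (2 * Suc j)" unfolding e by (simp add: algebra_simps)
  finally show ?case .
qed

lemma comb_ineq: assumes "j \<le> k"
  shows "real ((2*k) choose (2*j)) * dfact (k - j) \<le> dfact k * real (k choose j)"
proof -
  have f: "fact n > (0::real)" for n by simp
  have d: "dfact n = fact (2*n) / (2^n * fact n)" for n
    using dfact_fact[of n] by (simp add: field_simps)
  have e: "2*k - 2*j = 2*(k-j)" "k*2 - j*2 = (k-j)*2" by simp_all
  have p: "(2::real)^k = 2^j * 2^(k-j)" using assms by (simp add: power_add[symmetric])
  have L: "real ((2*k) choose (2*j)) * dfact (k - j) = fact (2*k) / (fact (2*j) * (2^(k-j) * fact (k-j)))"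
    using assms by (simp add: binomial_fact d e field_simps)
  have R: "dfact k * real (k choose j) = fact (2*k) / ((2^j * fact j) * (2^(k-j) * fact (k-j)))"
    using assms by (simp add: binomial_fact d p field_simps)
  show ?thesis unfolding L R
    by (intro divide_left_mono mult_right_mono pow2fact) (auto intro!: mult_pos_pos)
qed

lemma khintchine_moment:
  "(\<Sum>es\<in>signs m. (\<Sum>i<m. es!i * a i)^(2*k)) \<le> 2^m * dfact k * (\<Sum>i<m. (a i)^2)^k"
proof (induction m arbitrary: a k)
  case 0 then show ?case by (cases k) (simp_all add: signs_0)
next
  case (Suc m)
  define Y where "Y es = (\<Sum>i<m. es!i * a (Suc i))" for es
  define S where "S = (\<Sum>i<m. (a (Suc i))^2)"
  have S0: "S \<ge> 0" unfolding S_def by (simp add: sum_nonneg)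
  have F: "(\<Sum>i<Suc m. (e # es)!i * a i) = e * a 0 + Y es" for e es
    unfolding Y_def sum.lessThan_Suc_shift by simp
  have "(\<Sum>es\<in>signs (Suc m). (\<Sum>i<Suc m. es!i * a i)^(2*k))
      = (\<Sum>es\<in>signs m. (Y es + a 0)^(2*k) + (Y es - a 0)^(2*k))"
    unfolding signs_sum_Suc F by (simp add: add.commute)
  also have "\<dots> = (\<Sum>es\<in>signs m. \<Sum>j\<le>k. 2 * real ((2*k) choose (2*j)) * (a 0)^(2*j) * (Y es)^(2*(k-j)))"
    by (simp add: binom_even right_diff_distrib')
  also have "\<dots> = (\<Sum>j\<le>k. 2 * real ((2*k) choose (2*j)) * ((a 0)^2)^j * (\<Sum>es\<in>signs m. (Y es)^(2*(k-j))))"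
    by (simp add: sum.swap[of _ "signs m"] sum_distrib_left power_mult)
  also have "\<dots> \<le> (\<Sum>j\<le>k. 2 * real ((2*k) choose (2*j)) * ((a 0)^2)^j * (2^m * dfact (k-j) * S^(k-j)))"
    unfolding Y_def S_def by (intro sum_mono mult_left_mono Suc.IH) auto
  also have "\<dots> \<le> (\<Sum>j\<le>k. 2^Suc m * dfact k * (real (k choose j) * ((a 0)^2)^j * S^(k-j)))"
  proof (rule sum_mono)
    fix j assume j: "j \<in> {..k}"
    have c: "real ((2*k) choose (2*j)) * dfact (k - j) \<le> dfact k * real (k choose j)"
      using j by (intro comb_ineq) auto
    have nn: "0 \<le> 2 * 2^m * ((a 0)^2)^j * S^(k-j)" using S0 by simp
    have "2 * real ((2*k) choose (2*j)) * ((a 0)^2)^j * (2^m * dfact (k-j) * S^(k-j))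
        = (real ((2*k) choose (2*j)) * dfact (k - j)) * (2 * 2^m * ((a 0)^2)^j * S^(k-j))" by (simp add: mult_ac)
    also have "\<dots> \<le> (dfact k * real (k choose j)) * (2 * 2^m * ((a 0)^2)^j * S^(k-j))"
      by (rule mult_right_mono[OF c nn])
    also have "\<dots> = 2^Suc m * dfact k * (real (k choose j) * ((a 0)^2)^j * S^(k-j))" by (simp add: mult_ac)
    finally show "2 * real ((2*k) choose (2*j)) * ((a 0)^2)^j * (2^m * dfact (k-j) * S^(k-j))
        \<le> 2^Suc m * dfact k * (real (k choose j) * ((a 0)^2)^j * S^(k-j))" .
  qed
  also have "\<dots> = 2^Suc m * dfact k * ((a 0)^2 + S)^k"
    by (simp add: binomial_ring sum_distrib_left)
  also have "(a 0)^2 + S = (\<Sum>i<Suc m. (a i)^2)" unfolding S_def sum.lessThan_Suc_shift by simp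
  finally show ?case .
qed

lemma dfact_le: "dfact k \<le> real k ^ k"
proof (induction k)
  case 0 then show ?case by simp
next
  case (Suc k)
  show ?case
  proof (cases "k = 0")
    case True then show ?thesis by simp
  next
    case False
    have kp: "real k > 0" using False by simp
    have kp': "0 < 1 / real k" using kp by simp
    have b: "1 + real k * (1 / real k) \<le> (1 + 1 / real k)^k"
      by (rule Bernoulli_inequality) (use kp' in linarith)
    then have "2 \<le> (1 + 1 / real k)^k" using kp by simp
    then have "2 * real k ^ k \<le> (1 + 1 / real k)^k * real k ^ k" by (simp add: mult_right_mono)
    also have "\<dots> = (real k + 1)^k" using kp by (simp add: power_mult_distrib[symmetric] field_simps)
    finally have bb: "2 * real k ^ k \<le> (real k + 1)^k" .
    have "dfact (Suc k) = (2 * real k + 1) * dfact k" by simp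
    also have "\<dots> \<le> (2 * real k + 2) * real k ^ k"
      using Suc dfact_pos[of k] by (intro mult_mono) auto
    also have "\<dots> = (real k + 1) * (2 * real k ^ k)" by (simp add: algebra_simps)
    also have "\<dots> \<le> (real k + 1) * (real k + 1)^k" using bb by (intro mult_left_mono) auto
    also have "\<dots> = real (Suc k) ^ Suc k" by (simp add: add.commute)
    finally show ?thesis .
  qed
qed

lemma signs_ne: "signs m \<noteq> {}"
  using signs_card[of m] by (metis card.empty power_not_zero zero_neq_numeral)

lemma powr_powr_inv: "x \<ge> 0 \<Longrightarrow> r > 0 \<Longrightarrow> (x powr r) powr (1/r) = (x::real)"
  by (simp add: powr_powr)

lemma avg_le_powmean:
  fixes y :: "'i \<Rightarrow> real"
  assumes I: "finite I" "I \<noteq> {}" and y: "\<And>i. i \<in> I \<Longrightarrow> y i \<ge> 0" and p: "p \<ge> 1"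
  shows "(\<Sum>i\<in>I. y i) / card I \<le> ((\<Sum>i\<in>I. y i powr p) / card I) powr (1/p)"
proof -
  have nn: "(\<Sum>i\<in>I. y i) / card I \<ge> 0" using y by (simp add: sum_nonneg)
  have "(((\<Sum>i\<in>I. y i) / card I) powr p) powr (1/p) \<le> ((\<Sum>i\<in>I. y i powr p) / card I) powr (1/p)"
    using jensen_pow[OF I y p] p by (intro powr_mono2) auto
  then show ?thesis using nn p by (simp add: powr_powr_inv)
qed

lemma khintchine_avg:
  fixes V :: "nat \<Rightarrow> nat \<Rightarrow> real"
  assumes r: "r \<ge> 1" and k: "k \<ge> 1" "r \<le> 2 * real k"
  shows "(\<Sum>es\<in>signs m. (\<Sum>j<d. \<bar>\<Sum>i<m. es!i * V i j\<bar> powr r) powr (1/r)) / card (signs m)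
    \<le> dfact k powr (1 / (2 * real k)) * (\<Sum>j<d. (\<Sum>i<m. (V i j)^2) powr (r/2)) powr (1/r)"
proof -
  define U where "U es j = (\<Sum>i<m. es!i * V i j)" for es j
  define s2 where "s2 j = (\<Sum>i<m. (V i j)^2)" for j
  have s20: "s2 j \<ge> 0" for j unfolding s2_def by (simp add: sum_nonneg)
  define C where "C = real (card (signs m))"
  have C: "C = 2^m" unfolding C_def by (simp add: signs_card)
  have Cp: "C > 0" using C by simp
  have fin: "finite (signs m)" by (rule signs_finite)
  have r0: "r > 0" using r by simp
  have kr: "2 * real k / r \<ge> 1" using k r0 by (simp add: field_simps)
  have coord: "(\<Sum>es\<in>signs m. \<bar>U es j\<bar> powr r) / C \<le> dfact k powr (r / (2 * real k)) * s2 j powr (r/2)" for j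
  proof -
    have "(\<Sum>es\<in>signs m. \<bar>U es j\<bar> powr r) / C \<le>
        ((\<Sum>es\<in>signs m. (\<bar>U es j\<bar> powr r) powr (2 * real k / r)) / C) powr (1 / (2 * real k / r))"
      unfolding C_def by (rule avg_le_powmean[OF fin signs_ne _ kr]) simp
    also have "(\<Sum>es\<in>signs m. (\<bar>U es j\<bar> powr r) powr (2 * real k / r)) = (\<Sum>es\<in>signs m. (U es j)^(2*k))"
    proof (rule sum.cong[OF refl])
      fix es
      have "(\<bar>U es j\<bar> powr r) powr (2 * real k / r) = \<bar>U es j\<bar> powr (real (2*k))"
        using r0 by (simp add: powr_powr)
      also have "\<dots> = \<bar>U es j\<bar> ^ (2*k)"
        by (rule powr_realpow') (use k in auto)
      also have "\<dots> = (U es j)^(2*k)" by (simp add: power_mult)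
      finally show "(\<bar>U es j\<bar> powr r) powr (2 * real k / r) = (U es j)^(2*k)" .
    qed
    also have "((\<Sum>es\<in>signs m. (U es j)^(2*k)) / C) powr (1 / (2 * real k / r))
        \<le> (dfact k * s2 j ^ k) powr (r / (2 * real k))"
    proof -
      have "(\<Sum>es\<in>signs m. (U es j)^(2*k)) \<le> 2^m * dfact k * s2 j ^ k"
        unfolding U_def s2_def by (rule khintchine_moment)
      then have le: "(\<Sum>es\<in>signs m. (U es j)^(2*k)) / C \<le> dfact k * s2 j ^ k"
        using C by (simp add: field_simps)
      have nn: "0 \<le> (\<Sum>es\<in>signs m. (U es j)^(2*k)) / C"
        using Cp by (intro divide_nonneg_nonneg sum_nonneg) (auto simp: power_mult)
      show ?thesis using le nn r0 k by (simp add: powr_mono2)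
    qed
    also have "(dfact k * s2 j ^ k) powr (r / (2 * real k)) = dfact k powr (r / (2 * real k)) * s2 j powr (r/2)"
    proof -
      have "(s2 j ^ k) powr (r / (2 * real k)) = s2 j powr (r/2)"
      proof (cases "s2 j = 0")
        case True then show ?thesis using k r0 by simp
      next
        case False
        then have "s2 j > 0" using s20[of j] by simp
        then show ?thesis using k by (simp add: powr_realpow[symmetric] powr_powr)
      qed
      then show ?thesis using dfact_pos[of k] s20[of j] by (simp add: powr_mult)
    qed
    finally show ?thesis .
  qed
  define N where "N es = (\<Sum>j<d. \<bar>U es j\<bar> powr r) powr (1/r)" for es
  have N0: "N es \<ge> 0" for es unfolding N_def by simp
  have "(\<Sum>es\<in>signs m. N es) / C \<le> ((\<Sum>es\<in>signs m. N es powr r) / C) powr (1/r)"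
    unfolding C_def by (rule avg_le_powmean[OF fin signs_ne N0 r])
  also have "(\<Sum>es\<in>signs m. N es powr r) / C = (\<Sum>j<d. (\<Sum>es\<in>signs m. \<bar>U es j\<bar> powr r) / C)"
  proof -
    have "N es powr r = (\<Sum>j<d. \<bar>U es j\<bar> powr r)" for es
      unfolding N_def using r0 by (simp add: powr_powr sum_nonneg)
    then show ?thesis by (simp add: sum.swap[of _ "signs m"] sum_divide_distrib)
  qed
  also have "((\<Sum>j<d. (\<Sum>es\<in>signs m. \<bar>U es j\<bar> powr r) / C)) powr (1/r)
     \<le> (\<Sum>j<d. dfact k powr (r / (2 * real k)) * s2 j powr (r/2)) powr (1/r)"
    using coord r0 Cp by (intro powr_mono2 sum_mono) (auto intro!: sum_nonneg divide_nonneg_nonneg)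
  also have "\<dots> = dfact k powr (1 / (2 * real k)) * (\<Sum>j<d. s2 j powr (r/2)) powr (1/r)"
  proof -
    have "(\<Sum>j<d. dfact k powr (r / (2 * real k)) * s2 j powr (r/2)) = dfact k powr (r / (2 * real k)) * (\<Sum>j<d. s2 j powr (r/2))"
      by (simp add: sum_distrib_left)
    moreover have "(dfact k powr (r / (2 * real k))) powr (1/r) = dfact k powr (1 / (2 * real k))"
      using r0 by (simp add: powr_powr)
    ultimately show ?thesis using dfact_pos[of k] by (simp add: powr_mult sum_nonneg)
  qed
  finally show ?thesis unfolding N_def U_def s2_def C_def .
qed

lemma sq_powr: "((x::real)^2) powr (r/2) = \<bar>x\<bar> powr r"
proof -
  have a: "\<bar>x\<bar> powr (real 2) = \<bar>x\<bar>^2" by (rule powr_realpow') auto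
  have b: "(x^2) = \<bar>x\<bar> powr 2" using a by simp
  have "(x^2) powr (r/2) = (\<bar>x\<bar> powr 2) powr (r/2)" by (simp only: b)
  also have "\<dots> = \<bar>x\<bar> powr (2 * (r/2))" by (rule powr_powr)
  finally show ?thesis by simp
qed

lemma row_sum_le: fixes V :: "nat \<Rightarrow> real" assumes "(\<Sum>j<d. \<bar>V j\<bar> powr r) powr (1/r) \<le> Mx" "r > 0"
  shows "(\<Sum>j<d. \<bar>V j\<bar> powr r) \<le> Mx powr r" "Mx \<ge> 0"
proof -
  have "0 \<le> (\<Sum>j<d. \<bar>V j\<bar> powr r) powr (1/r)" by (rule powr_ge_zero)
  then show M0: "Mx \<ge> 0" using assms(1) by linarith
  have "((\<Sum>j<d. \<bar>V j\<bar> powr r) powr (1/r)) powr r \<le> Mx powr r"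
    using assms by (intro powr_mono2) auto
  then show "(\<Sum>j<d. \<bar>V j\<bar> powr r) \<le> Mx powr r" using assms(2) by (simp add: powr_powr sum_nonneg)
qed

lemma sigma_bound_ge2:
  fixes V :: "nat \<Rightarrow> nat \<Rightarrow> real"
  assumes m: "m > 0" and r: "r \<ge> 2" and Mx: "\<And>i. i < m \<Longrightarrow> (\<Sum>j<d. \<bar>V i j\<bar> powr r) powr (1/r) \<le> Mx"
  shows "(\<Sum>j<d. (\<Sum>i<m. (V i j)^2) powr (r/2)) powr (1/r) \<le> sqrt (real m) * Mx"
proof -
  have r0: "r > 0" using r by simp
  have M0: "Mx \<ge> 0" using row_sum_le(2)[OF Mx[OF m] r0] .
  have rowle: "(\<Sum>j<d. \<bar>V i j\<bar> powr r) \<le> Mx powr r" if "i < m" for i using row_sum_le(1)[OF Mx[OF that] r0] .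
  have col: "(\<Sum>i<m. (V i j)^2) powr (r/2) \<le> real m powr (r/2 - 1) * (\<Sum>i<m. \<bar>V i j\<bar> powr r)" for j
  proof -
    have "((\<Sum>i<m. (V i j)^2) / card {..<m}) powr (r/2) \<le> (\<Sum>i<m. ((V i j)^2) powr (r/2)) / card {..<m}"
      using m r by (intro jensen_pow) auto
    then have "(\<Sum>i<m. (V i j)^2) powr (r/2) / real m powr (r/2) \<le> (\<Sum>i<m. \<bar>V i j\<bar> powr r) / real m"
      by (simp add: sq_powr powr_divide sum_nonneg)
    then have "(\<Sum>i<m. (V i j)^2) powr (r/2) \<le> real m powr (r/2) * ((\<Sum>i<m. \<bar>V i j\<bar> powr r) / real m)"
      using m by (simp add: divide_le_eq mult.commute)
    also have "\<dots> = real m powr (r/2 - 1) * (\<Sum>i<m. \<bar>V i j\<bar> powr r)"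
      using m by (simp add: powr_diff)
    finally show ?thesis .
  qed
  have "(\<Sum>j<d. (\<Sum>i<m. (V i j)^2) powr (r/2)) \<le> (\<Sum>j<d. real m powr (r/2 - 1) * (\<Sum>i<m. \<bar>V i j\<bar> powr r))"
    by (rule sum_mono) (rule col)
  also have "\<dots> = real m powr (r/2 - 1) * (\<Sum>i<m. \<Sum>j<d. \<bar>V i j\<bar> powr r)"
    by (simp add: sum_distrib_left sum.swap[of _ "{..<d}"])
  also have "\<dots> \<le> real m powr (r/2 - 1) * (\<Sum>i<m. Mx powr r)"
    using rowle by (intro mult_left_mono sum_mono) auto
  also have "\<dots> = real m powr (r/2) * Mx powr r"
    using m by (simp add: powr_diff)
  finally have le: "(\<Sum>j<d. (\<Sum>i<m. (V i j)^2) powr (r/2)) \<le> real m powr (r/2) * Mx powr r" .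
  have "(\<Sum>j<d. (\<Sum>i<m. (V i j)^2) powr (r/2)) powr (1/r) \<le> (real m powr (r/2) * Mx powr r) powr (1/r)"
    using le r0 by (intro powr_mono2) (auto intro: sum_nonneg)
  also have "\<dots> = real m powr (1/2) * Mx"
    using r0 M0 by (simp add: powr_mult powr_powr)
  also have "\<dots> = sqrt (real m) * Mx" by (simp add: powr_half_sqrt)
  finally show ?thesis .
qed

lemma sigma_bound_le2:
  fixes V :: "nat \<Rightarrow> nat \<Rightarrow> real"
  assumes m: "m > 0" and r: "r \<ge> 1" "r \<le> 2" and Mx: "\<And>i. i < m \<Longrightarrow> (\<Sum>j<d. \<bar>V i j\<bar> powr r) powr (1/r) \<le> Mx"
  shows "(\<Sum>j<d. (\<Sum>i<m. (V i j)^2) powr (r/2)) powr (1/r) \<le> real m powr (1/r) * Mx"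
proof -
  have r0: "r > 0" using r by simp
  have M0: "Mx \<ge> 0" using row_sum_le(2)[OF Mx[OF m] r0] .
  have rowle: "(\<Sum>j<d. \<bar>V i j\<bar> powr r) \<le> Mx powr r" if "i < m" for i using row_sum_le(1)[OF Mx[OF that] r0] .
  have col: "(\<Sum>i<m. (V i j)^2) powr (r/2) \<le> (\<Sum>i<m. \<bar>V i j\<bar> powr r)" for j
  proof -
    have "(\<Sum>i<m. ((V i j)^2) powr 1) powr (1/1) \<le> (\<Sum>i<m. ((V i j)^2) powr (r/2)) powr (1/(r/2))"
      using r by (intro lmono) auto
    then have a: "(\<Sum>i<m. (V i j)^2) \<le> (\<Sum>i<m. \<bar>V i j\<bar> powr r) powr (2/r)"
      by (simp add: sq_powr)
    have "(\<Sum>i<m. (V i j)^2) powr (r/2) \<le> ((\<Sum>i<m. \<bar>V i j\<bar> powr r) powr (2/r)) powr (r/2)"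
      using a r0 by (intro powr_mono2) (auto intro: sum_nonneg)
    also have "\<dots> = (\<Sum>i<m. \<bar>V i j\<bar> powr r)" using r0 by (simp add: powr_powr sum_nonneg)
    finally show ?thesis .
  qed
  have "(\<Sum>j<d. (\<Sum>i<m. (V i j)^2) powr (r/2)) \<le> (\<Sum>j<d. \<Sum>i<m. \<bar>V i j\<bar> powr r)"
    by (rule sum_mono) (rule col)
  also have "\<dots> = (\<Sum>i<m. \<Sum>j<d. \<bar>V i j\<bar> powr r)" by (rule sum.swap)
  also have "\<dots> \<le> (\<Sum>i<m. Mx powr r)" using rowle by (intro sum_mono) auto
  also have "\<dots> = real m * Mx powr r" by simp
  finally have le: "(\<Sum>j<d. (\<Sum>i<m. (V i j)^2) powr (r/2)) \<le> real m * Mx powr r" .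
  have "(\<Sum>j<d. (\<Sum>i<m. (V i j)^2) powr (r/2)) powr (1/r) \<le> (real m * Mx powr r) powr (1/r)"
    using le r0 by (intro powr_mono2) (auto intro: sum_nonneg)
  also have "\<dots> = real m powr (1/r) * Mx"
    using r0 M0 by (simp add: powr_mult powr_powr)
  finally show ?thesis .
qed

lemma sample_bound:
  assumes C: "Cs \<in> circuits l ns" and len: "length ns = l + 1" and ns: "\<forall>i\<le>l. ns ! i \<ge> 1"
    and p: "p \<ge> 1" and q: "q > 0" and mu: "mu_pq p q ns Cs \<le> \<mu>"
    and pure: "\<forall>x. pure_state (ns ! 0) (\<rho> x)" and H: "hermitian (2 ^ (ns ! l)) H"
  shows "\<bar>\<Sum>i<m. es!i * model_fun \<rho> H Cs (xs!i)\<bar> \<le>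
    lnorm (4^(ns!l)) (alpha_vec (ns!l) H) (ereal p) * (4 powr ((\<Sum>i\<in>{1..l}. real (ns!i)) * cfac p q) * \<mu>) *
    lnorm (4^(ns!0)) (\<lambda>z. \<Sum>i<m. complex_of_real (es!i) * fI_vec (ns!0) (\<rho> (xs!i)) z) (hconj p)"
proof -
  have Hc: "H \<in> carrier_mat (2^(ns!l)) (2^(ns!l))" using H by (simp add: hermitian_def)
  define u where "u i = fI_vec (ns!0) (\<rho> (xs!i))" for i
  define U where "U = (\<lambda>z. \<Sum>i<m. complex_of_real (es!i) * u i z)"
  define \<alpha> where "\<alpha> = alpha_vec (ns!l) H"
  define W where "W = wl Cs ns l U"
  have lenC: "length Cs = l" using C by (simp add: circuits_def)
  have mf: "model_fun \<rho> H Cs (xs!i) = Re (\<Sum>z<4^(ns!l). \<alpha> z * wl Cs ns l (u i) z)" for i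
  proof -
    have ps: "pure_state (ns!0) (\<rho> (xs!i))" using pure by blast
    show ?thesis unfolding \<alpha>_def u_def by (rule model_fun_eq[where \<rho>=\<rho> and x="xs!i", OF C len ps Hc])
  qed
  have W: "W = (\<lambda>z. \<Sum>i<m. complex_of_real (es!i) * wl Cs ns l (u i) z)"
    unfolding W_def U_def by (rule wl_linear)
  have "(\<Sum>i<m. es!i * model_fun \<rho> H Cs (xs!i)) = Re (\<Sum>i<m. complex_of_real (es!i) * (\<Sum>z<4^(ns!l). \<alpha> z * wl Cs ns l (u i) z))"
    unfolding mf by (simp add: Re_sum)
  also have "(\<Sum>i<m. complex_of_real (es!i) * (\<Sum>z<4^(ns!l). \<alpha> z * wl Cs ns l (u i) z)) = (\<Sum>z<4^(ns!l). \<alpha> z * W z)"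
  proof -
    have "(\<Sum>i<m. complex_of_real (es!i) * (\<Sum>z<4^(ns!l). \<alpha> z * wl Cs ns l (u i) z))
       = (\<Sum>i<m. \<Sum>z<4^(ns!l). \<alpha> z * (complex_of_real (es!i) * wl Cs ns l (u i) z))"
      by (simp only: sum_distrib_left mult.left_commute)
    also have "\<dots> = (\<Sum>z<4^(ns!l). \<Sum>i<m. \<alpha> z * (complex_of_real (es!i) * wl Cs ns l (u i) z))"
      by (rule sum.swap)
    also have "\<dots> = (\<Sum>z<4^(ns!l). \<alpha> z * W z)"
      unfolding W by (simp only: sum_distrib_left)
    finally show ?thesis .
  qed
  finally have eq: "(\<Sum>i<m. es!i * model_fun \<rho> H Cs (xs!i)) = Re (\<Sum>z<4^(ns!l). \<alpha> z * W z)" .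
  define a where "a = lnorm (4^(ns!l)) \<alpha> (ereal p)"
  define w where "w = lnorm (4^(ns!l)) W (hconj p)"
  define uu where "uu = lnorm (4^(ns!0)) U (hconj p)"
  define E' where "E' = 4 powr ((\<Sum>i\<in>{1..l}. real (ns!i)) * cfac p q)"
  have a0: "a \<ge> 0" unfolding a_def by (rule lnorm_nonneg) simp
  have u0: "uu \<ge> 0" unfolding uu_def by (rule lnorm_nonneg) simp
  have E0: "E' \<ge> 0" unfolding E'_def by simp
  have A: "\<bar>Re (\<Sum>z<4^(ns!l). \<alpha> z * W z)\<bar> \<le> a * w"
  proof -
    have "\<bar>Re (\<Sum>z<4^(ns!l). \<alpha> z * W z)\<bar> \<le> cmod (\<Sum>z<4^(ns!l). \<alpha> z * W z)" by (rule abs_Re_le_cmod)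
    also have "\<dots> \<le> a * w" unfolding a_def w_def
      by (rule holder_lnorm) (use p in auto)
    finally show ?thesis .
  qed
  have B: "w \<le> (\<Prod>i<l. real (4^(ns!Suc i)) powr cfac p q * group_norm (rep_mat (ns!i) (ns!Suc i) (Cs!i)) p q) * uu"
    unfolding w_def uu_def W_def by (rule multilayer[OF C len ns p q order_refl])
  have Cq: "(\<Prod>i<l. real (4^(ns!Suc i)) powr cfac p q * group_norm (rep_mat (ns!i) (ns!Suc i) (Cs!i)) p q)
      = E' * mu_pq p q ns Cs"
    unfolding prod_split_fac mu_pq_def lenC E'_def ..
  have "w \<le> E' * \<mu> * uu"
  proof -
    have "E' * mu_pq p q ns Cs \<le> E' * \<mu>" using mu E0 by (rule mult_left_mono)
    then have "E' * mu_pq p q ns Cs * uu \<le> E' * \<mu> * uu" using u0 by (rule mult_right_mono)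
    then show ?thesis using B Cq by simp
  qed
  then have "a * w \<le> a * (E' * \<mu> * uu)" using a0 by (rule mult_left_mono)
  then have "\<bar>\<Sum>i<m. es!i * model_fun \<rho> H Cs (xs!i)\<bar> \<le> a * (E' * \<mu>) * uu"
    using A eq by (simp add: mult.assoc)
  then show ?thesis unfolding a_def E'_def uu_def \<alpha>_def U_def u_def .
qed

lemma entry_le_lnorm: assumes "j < d" "p \<ge> 1" shows "cmod (v j) \<le> lnorm d v (hconj p)"
proof (cases "p = 1")
  case True then show ?thesis using assms by (simp add: hconj_1 lnorm_entry_le_inf)
next
  case False
  then have p1: "p > 1" using assms by simp
  have "cmod (v j) \<le> (\<Sum>i<d. cmod (v i) powr (p/(p-1))) powr (1/(p/(p-1)))"
    using p1 assms by (intro maxle) auto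
  then show ?thesis using p1 by (simp add: hconj_gt1 lnorm_fin)
qed

lemma real_vec_cmod:
  assumes "\<And>i j. Im (f i j) = 0"
  shows "cmod (\<Sum>i<m. complex_of_real (es!i) * f i z) = \<bar>\<Sum>i<m. es!i * Re (f i z)\<bar>"
proof -
  have "f i z = complex_of_real (Re (f i z))" for i using assms[of i z] by (simp add: complex_eq_iff)
  then have eq: "(\<Sum>i<m. complex_of_real (es!i) * f i z) = complex_of_real (\<Sum>i<m. es!i * Re (f i z))"
    by (metis (no_types, lifting) of_real_mult of_real_sum sum.cong)
  show ?thesis unfolding eq norm_of_real ..
qed

lemma dfact_root_le: assumes "k \<ge> 1" "real k \<le> r" shows "dfact k powr (1 / (2 * real k)) \<le> sqrt r"
proof -
  have "dfact k \<le> real k ^ k" by (rule dfact_le)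
  also have "\<dots> \<le> r ^ k" using assms by (intro power_mono) auto
  finally have le: "dfact k \<le> r ^ k" .
  have r0: "r > 0" using assms by simp
  have "dfact k powr (1 / (2 * real k)) \<le> (r ^ k) powr (1 / (2 * real k))"
    using le dfact_pos[of k] by (intro powr_mono2) auto
  also have "\<dots> = r powr (1/2)"
    using r0 assms by (simp add: powr_realpow[symmetric] powr_powr)
  finally show ?thesis using r0 by (simp add: powr_half_sqrt)
qed

lemma lnorm_real_sum:
  assumes "\<And>i j. Im (f i j) = 0"
  shows "lnorm d (\<lambda>z. \<Sum>i<m. complex_of_real (es!i) * f i z) (ereal r) =
    (\<Sum>j<d. \<bar>\<Sum>i<m. es!i * Re (f i j)\<bar> powr r) powr (1/r)"
  unfolding lnorm_fin using real_vec_cmod[where f=f, OF assms] by simp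

lemma lnorm_real_vec:
  assumes "\<And>j. Im (v j) = 0"
  shows "lnorm d v (ereal r) = (\<Sum>j<d. \<bar>Re (v j)\<bar> powr r) powr (1/r)"
  unfolding lnorm_fin using assms by (simp add: cmod_eq_Re)

lemma avg_generic:
  assumes f: "\<And>i j. Im (f i j) = 0" and r: "r \<ge> 1" and k: "k \<ge> 1" "r \<le> 2 * real k"
  shows "(\<Sum>es\<in>signs m. lnorm d (\<lambda>z. \<Sum>i<m. complex_of_real (es!i) * f i z) (ereal r)) / card (signs m)
    \<le> dfact k powr (1 / (2 * real k)) * (\<Sum>j<d. (\<Sum>i<m. (Re (f i j))^2) powr (r/2)) powr (1/r)"
  unfolding lnorm_real_sum[OF f] by (rule khintchine_avg[OF r k])

lemma avg_ge2:
  assumes f: "\<And>i j. Im (f i j) = 0" and m: "m > 0" and r: "r \<ge> 2" and k: "k \<ge> 1" "r \<le> 2 * real k"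
    and Mx: "\<And>i. i < m \<Longrightarrow> lnorm d (f i) (ereal r) \<le> Mx"
  shows "(\<Sum>es\<in>signs m. lnorm d (\<lambda>z. \<Sum>i<m. complex_of_real (es!i) * f i z) (ereal r)) / card (signs m)
    \<le> dfact k powr (1 / (2 * real k)) * (sqrt (real m) * Mx)"
proof -
  have s: "(\<Sum>j<d. (\<Sum>i<m. (Re (f i j))^2) powr (r/2)) powr (1/r) \<le> sqrt (real m) * Mx"
    using Mx r m by (intro sigma_bound_ge2) (auto simp: lnorm_real_vec f)
  have g: "(\<Sum>es\<in>signs m. lnorm d (\<lambda>z. \<Sum>i<m. complex_of_real (es!i) * f i z) (ereal r)) / card (signs m)
    \<le> dfact k powr (1 / (2 * real k)) * (\<Sum>j<d. (\<Sum>i<m. (Re (f i j))^2) powr (r/2)) powr (1/r)"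
    by (rule avg_generic[OF f _ k]) (use r in auto)
  have "dfact k powr (1 / (2 * real k)) * (\<Sum>j<d. (\<Sum>i<m. (Re (f i j))^2) powr (r/2)) powr (1/r)
     \<le> dfact k powr (1 / (2 * real k)) * (sqrt (real m) * Mx)"
    using s by (rule mult_left_mono) simp
  then show ?thesis using g by linarith
qed

lemma avg_le2:
  assumes f: "\<And>i j. Im (f i j) = 0" and m: "m > 0" and r: "r \<ge> 1" "r \<le> 2"
    and Mx: "\<And>i. i < m \<Longrightarrow> lnorm d (f i) (ereal r) \<le> Mx"
  shows "(\<Sum>es\<in>signs m. lnorm d (\<lambda>z. \<Sum>i<m. complex_of_real (es!i) * f i z) (ereal r)) / card (signs m)
    \<le> real m powr (1/r) * Mx"
proof -
  have "(\<Sum>j<d. (\<Sum>i<m. (Re (f i j))^2) powr (r/2)) powr (1/r) \<le> real m powr (1/r) * Mx"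
    using Mx r m by (intro sigma_bound_le2) (auto simp: lnorm_real_vec f)
  moreover have "(\<Sum>es\<in>signs m. lnorm d (\<lambda>z. \<Sum>i<m. complex_of_real (es!i) * f i z) (ereal r)) / card (signs m)
    \<le> dfact 1 powr (1 / (2 * real 1)) * (\<Sum>j<d. (\<Sum>i<m. (Re (f i j))^2) powr (r/2)) powr (1/r)"
    by (rule avg_generic[OF f r(1)]) (use r in auto)
  ultimately show ?thesis by simp
qed

lemma avg_B:
  assumes f: "\<And>i j. Im (f i j) = 0" and m: "m > 0" and n0: "n0 \<ge> 1" and p: "p \<ge> 1"
    and big: "p = 1 \<or> p / (p - 1) \<ge> 8 * real n0"
    and Mx: "\<And>i. i < m \<Longrightarrow> lnorm (4^n0) (f i) (hconj p) \<le> Mx"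
  shows "(\<Sum>es\<in>signs m. lnorm (4^n0) (\<lambda>z. \<Sum>i<m. complex_of_real (es!i) * f i z) (hconj p)) / card (signs m)
    \<le> sqrt (8 * real n0) * (sqrt (real m) * Mx)"
proof -
  define d :: nat where "d = 4^n0"
  have d0: "d > 0" by (simp add: d_def)
  define k where "k = 4 * n0"
  define s where "s = 2 * real k"
  have k1: "k \<ge> 1" using n0 by (simp add: k_def)
  have s2: "s \<ge> 2" using k1 by (simp add: s_def)
  have s8: "s = 8 * real n0" by (simp add: s_def k_def)
  define Uc where "Uc es = (\<lambda>z. \<Sum>i<m. complex_of_real (es!i) * f i z)" for es
  have pt: "lnorm d (Uc es) (hconj p) \<le> lnorm d (Uc es) (ereal s)" for es
  proof (cases "p = 1")
    case True
    have "lnorm d (Uc es) (hconj p) = Max ((\<lambda>i. cmod (Uc es i)) ` {..<d})" by (simp add: True hconj_1 lnorm_inf)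
    also have "\<dots> \<le> (\<Sum>i<d. cmod (Uc es i) powr s) powr (1/s)"
      using d0 s2 by (intro Max_img_le maxle) auto
    finally show ?thesis by (simp add: lnorm_fin)
  next
    case False
    then have p1: "p > 1" using p by simp
    have rs: "p / (p - 1) \<ge> s" using big False s8 by simp
    have "lnorm d (Uc es) (hconj p) = (\<Sum>i<d. cmod (Uc es i) powr (p / (p - 1))) powr (1 / (p / (p - 1)))"
      using p1 by (simp add: hconj_gt1 lnorm_fin)
    also have "\<dots> \<le> (\<Sum>i<d. cmod (Uc es i) powr s) powr (1/s)"
      using rs s2 by (intro lmono) auto
    finally show ?thesis by (simp add: lnorm_fin)
  qed
  have Ms: "lnorm d (f i) (ereal s) \<le> real d powr (1/s) * Mx" if i: "i < m" for i
  proof -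
    have "lnorm d (f i) (ereal s) = (\<Sum>j<d. cmod (f i j) powr s) powr (1/s)" by (simp add: lnorm_fin)
    also have "\<dots> \<le> card {..<d} powr (1/s) * Mx"
    proof (rule sum_le_max)
      fix j assume "j \<in> {..<d}"
      then have "cmod (f i j) \<le> lnorm d (f i) (hconj p)" using p by (intro entry_le_lnorm) auto
      then show "0 \<le> cmod (f i j) \<and> cmod (f i j) \<le> Mx" using Mx[OF i] by (simp add: d_def)
    qed (use s2 in auto)
    finally show ?thesis by simp
  qed
  have "(\<Sum>es\<in>signs m. lnorm d (Uc es) (hconj p)) / card (signs m) \<le> (\<Sum>es\<in>signs m. lnorm d (Uc es) (ereal s)) / card (signs m)"
    by (intro divide_right_mono sum_mono pt) auto
  also have "\<dots> \<le> dfact k powr (1 / (2 * real k)) * (sqrt (real m) * (real d powr (1/s) * Mx))"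
    unfolding Uc_def by (rule avg_ge2[OF f m s2 k1]) (use Ms s_def in auto)
  also have "\<dots> = (dfact k powr (1 / (2 * real k)) * real d powr (1 / (2 * real k))) * (sqrt (real m) * Mx)"
    by (simp add: s_def mult_ac)
  also have "dfact k powr (1 / (2 * real k)) * real d powr (1 / (2 * real k)) \<le> sqrt (8 * real n0)"
  proof -
    have "real d = 2 ^ (2 * n0)" by (simp add: d_def power_mult)
    also have "\<dots> \<le> 2 ^ k" by (intro power_increasing) (auto simp: k_def)
    finally have dle: "real d \<le> 2 ^ k" .
    have "dfact k * real d \<le> real k ^ k * 2 ^ k"
      using dfact_le[of k] dle dfact_pos[of k] by (intro mult_mono) auto
    also have "\<dots> = (2 * real k) ^ k" by (simp add: power_mult_distrib)
    finally have le: "dfact k * real d \<le> (2 * real k) ^ k" .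
    have "dfact k powr (1 / (2 * real k)) * real d powr (1 / (2 * real k)) = (dfact k * real d) powr (1 / (2 * real k))"
      using dfact_pos[of k] by (simp add: powr_mult)
    also have "\<dots> \<le> ((2 * real k) ^ k) powr (1 / (2 * real k))"
      using le dfact_pos[of k] d0 by (intro powr_mono2) auto
    also have "\<dots> = (2 * real k) powr (1/2)"
    proof -
      have kp: "2 * real k > 0" using k1 by simp
      have "(2 * real k) ^ k = (2 * real k) powr (real k)" by (rule powr_realpow[symmetric, OF kp])
      then have "((2 * real k) ^ k) powr (1 / (2 * real k)) = (2 * real k) powr (real k * (1 / (2 * real k)))"
        by (simp only: powr_powr)
      also have "real k * (1 / (2 * real k)) = 1/2" using kp by simp
      finally show ?thesis .
    qed
    also have "\<dots> = sqrt (8 * real n0)" by (simp add: powr_half_sqrt k_def)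
    finally show ?thesis .
  qed
  then have "(dfact k powr (1 / (2 * real k)) * real d powr (1 / (2 * real k))) * (sqrt (real m) * Mx)
      \<le> sqrt (8 * real n0) * (sqrt (real m) * Mx)"
  proof (rule mult_right_mono)
    have "0 \<le> lnorm d (f 0) (hconj p)" using d0 by (rule lnorm_nonneg)
    then show "0 \<le> sqrt (real m) * Mx" using Mx[OF m] by (simp add: d_def)
  qed
  finally show ?thesis by (simp add: d_def Uc_def)
qed

lemma rad_bound:
  assumes m: "m = length xs" "m > 0" and B: "B \<ge> 0"
    and N0: "\<And>es. Nes es \<ge> 0"
    and S: "\<And>es g. es \<in> signs m \<Longrightarrow> g \<in> G \<Longrightarrow> \<bar>\<Sum>i<m. es ! i * g (xs ! i)\<bar> \<le> B * Nes es"
  shows "rademacher xs G \<le> B / real m * ((\<Sum>es\<in>signs m. Nes es) / card (signs m))"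
proof -
  have E: "{es :: real list. length es = m \<and> set es \<subseteq> {-1, 1}} = signs m" by (simp add: signs_def)
  have sup: "Sup (insert 0 {\<bar>\<Sum>i<m. es ! i * g (xs ! i)\<bar> | g. g \<in> G}) \<le> B * Nes es" if es: "es \<in> signs m" for es
  proof (rule cSup_least)
    show "insert 0 {\<bar>\<Sum>i<m. es ! i * g (xs ! i)\<bar> | g. g \<in> G} \<noteq> {}" by simp
  next
    fix x assume "x \<in> insert 0 {\<bar>\<Sum>i<m. es ! i * g (xs ! i)\<bar> | g. g \<in> G}"
    then show "x \<le> B * Nes es" using S[OF es] B N0[of es] by auto
  qed
  have "rademacher xs G = (1 / real (card (signs m))) * (\<Sum>es\<in>signs m. (1 / real m) *
        Sup (insert 0 {\<bar>\<Sum>i<m. es ! i * g (xs ! i)\<bar> | g. g \<in> G}))"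
    unfolding rademacher_def Let_def m(1)[symmetric] E ..
  also have "\<dots> \<le> (1 / real (card (signs m))) * (\<Sum>es\<in>signs m. (1 / real m) * (B * Nes es))"
    using sup m by (intro mult_left_mono sum_mono) auto
  also have "\<dots> = B / real m * ((\<Sum>es\<in>signs m. Nes es) / card (signs m))"
  proof -
    have "(\<Sum>es\<in>signs m. (1 / real m) * (B * Nes es)) = (1 / real m) * B * (\<Sum>es\<in>signs m. Nes es)"
      by (simp add: sum_distrib_left mult.assoc)
    then show ?thesis by simp
  qed
  finally show ?thesis .
qed

theorem mainTheorem5:
  fixes l :: nat and ns :: "nat list" and \<mu> p :: real and q :: ereal
    and \<rho> :: "'x \<Rightarrow> complex mat" and H :: "complex mat" and xs :: "'x list"
  assumes "l \<ge> 1" and "length ns = l + 1" and "\<forall>i\<le>l. ns ! i \<ge> 1"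
    and "\<mu> > 0" and "1 \<le> p" and "0 < q"
    and "\<forall>x. pure_state (ns ! 0) (\<rho> x)"
    and "hermitian (2 ^ (ns ! l)) H"
    and "xs \<noteq> []"
  shows
    "let m = length xs;
         G = (\<lambda>Cs. model_fun \<rho> H Cs) ` {Cs \<in> circuits l ns. mu_pq p q ns Cs \<le> \<mu>};
         E = 4 powr ((\<Sum>i\<in>{1..l}. real (ns ! i)) * max (1 - 1 / p) (ereal_recip q));
         K = K_p p (ns ! 0) (ns ! l) \<rho> xs H
     in (p \<le> 2 \<longrightarrow> rademacher xs G \<le>
           \<mu> * E * sqrt (real_of_ereal (min (hconj p) (ereal (8 * real (ns ! 0))))) / sqrt (real m) * K)
      \<and> (2 < p \<longrightarrow> rademacher xs G \<le>
           \<mu> * E * sqrt (real_of_ereal (hconj p)) / (real m powr (1 / p)) * K)"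
proof -
  define m where "m = length xs"
  define n0 where "n0 = ns ! 0"
  define nl where "nl = ns ! l"
  have m0: "m > 0" using assms(9) by (simp add: m_def)
  have n01: "n0 \<ge> 1" using assms(3) by (simp add: n0_def)
  define G where "G = (\<lambda>Cs. model_fun \<rho> H Cs) ` {Cs \<in> circuits l ns. mu_pq p q ns Cs \<le> \<mu>}"
  define Ec where "Ec = 4 powr ((\<Sum>i\<in>{1..l}. real (ns ! i)) * max (1 - 1 / p) (ereal_recip q))"
  define a where "a = lnorm (4^nl) (alpha_vec nl H) (ereal p)"
  define f where "f i z = fI_vec n0 (\<rho> (xs!i)) z" for i z
  define Mx where "Mx = Max ((\<lambda>x. lnorm (4^n0) (fI_vec n0 (\<rho> x)) (hconj p)) ` set xs)"
  have K: "K_p p n0 nl \<rho> xs H = a * Mx" by (simp add: K_p_def a_def Mx_def)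
  have freal: "Im (f i j) = 0" for i j
  proof -
    have "pure_state (ns ! 0) (\<rho> (xs!i))" using assms(7) by blast
    then show ?thesis unfolding f_def n0_def by (rule fI_real)
  qed
  have Mxb: "lnorm (4^n0) (f i) (hconj p) \<le> Mx" if i: "i < m" for i
  proof -
    have "xs ! i \<in> set xs" using i by (simp add: m_def)
    then show ?thesis unfolding Mx_def f_def by (intro Max_ge) auto
  qed
  have a0: "a \<ge> 0" unfolding a_def by (rule lnorm_nonneg) simp
  have Mx0: "Mx \<ge> 0"
  proof -
    have "0 \<le> lnorm (4^n0) (f 0) (hconj p)" by (rule lnorm_nonneg) simp
    then show ?thesis using Mxb[OF m0] by simp
  qed
  have Ec0: "Ec \<ge> 0" by (simp add: Ec_def)
  define Nes where "Nes es = lnorm (4^n0) (\<lambda>z. \<Sum>i<m. complex_of_real (es!i) * f i z) (hconj p)" for es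
  have N0: "Nes es \<ge> 0" for es unfolding Nes_def by (rule lnorm_nonneg) simp
  define B where "B = a * (Ec * \<mu>)"
  have B0: "B \<ge> 0" using a0 Ec0 assms(4) by (simp add: B_def)
  have S: "\<bar>\<Sum>i<m. es ! i * g (xs ! i)\<bar> \<le> B * Nes es" if g: "g \<in> G" for es g
  proof -
    obtain Cs where Cs: "Cs \<in> circuits l ns" "mu_pq p q ns Cs \<le> \<mu>" and gd: "g = model_fun \<rho> H Cs"
      using g unfolding G_def by auto
    have "\<bar>\<Sum>i<m. es!i * model_fun \<rho> H Cs (xs!i)\<bar> \<le>
      lnorm (4^(ns!l)) (alpha_vec (ns!l) H) (ereal p) * (4 powr ((\<Sum>i\<in>{1..l}. real (ns!i)) * cfac p q) * \<mu>) *
      lnorm (4^(ns!0)) (\<lambda>z. \<Sum>i<m. complex_of_real (es!i) * fI_vec (ns!0) (\<rho> (xs!i)) z) (hconj p)"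
      by (rule sample_bound[OF Cs(1) assms(2) assms(3) assms(5) assms(6) Cs(2) assms(7) assms(8)])
    then show ?thesis unfolding gd B_def a_def Ec_def Nes_def f_def n0_def nl_def cfac_def .
  qed
  have rad: "rademacher xs G \<le> B / real m * ((\<Sum>es\<in>signs m. Nes es) / card (signs m))"
    by (rule rad_bound[OF m_def m0 B0 N0 S])
  define avgN where "avgN = (\<Sum>es\<in>signs m. Nes es) / card (signs m)"
  have part1: "rademacher xs G \<le> \<mu> * Ec * sqrt (real_of_ereal (min (hconj p) (ereal (8 * real n0)))) / sqrt (real m) * (a * Mx)"
    if p2: "p \<le> 2"
  proof -
    define c where "c = sqrt (real_of_ereal (min (hconj p) (ereal (8 * real n0))))"
    have avg: "avgN \<le> c * (sqrt (real m) * Mx)"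
    proof (cases "p = 1 \<or> p / (p - 1) \<ge> 8 * real n0")
      case True
      have c: "c = sqrt (8 * real n0)"
      proof (cases "p = 1")
        case True then show ?thesis by (simp add: c_def hconj_1)
      next
        case False
        then have "p > 1" using assms(5) by simp
        then show ?thesis using True False by (simp add: c_def hconj_gt1 min_def)
      qed
      show ?thesis unfolding avgN_def Nes_def c
        by (rule avg_B[OF freal m0 n01 assms(5) True Mxb])
    next
      case False
      then have p1: "p > 1" and rs: "p / (p - 1) < 8 * real n0" using assms(5) by auto
      define r where "r = p / (p - 1)"
      have r2: "r \<ge> 2" using p1 p2 by (simp add: r_def field_simps)
      have c: "c = sqrt r" using rs p1 by (simp add: c_def hconj_gt1 r_def min_def)
      define k where "k = nat \<lceil>r / 2\<rceil>"
      have kr: "real k = of_int \<lceil>r / 2\<rceil>" using r2 by (simp add: k_def)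
      have "real k \<ge> 1" using le_of_int_ceiling[of "r/2"] kr r2 by linarith
      then have k1: "k \<ge> 1" by simp
      have rk: "r \<le> 2 * real k" using le_of_int_ceiling[of "r/2"] kr by linarith
      have kle: "real k \<le> r" using of_int_ceiling_le_add_one[of "r/2"] kr r2 by linarith
      have hp: "hconj p = ereal r" using p1 by (simp add: hconj_gt1 r_def)
      have Mxr: "lnorm (4^n0) (f i) (ereal r) \<le> Mx" if "i < m" for i using Mxb[OF that] hp by simp
      have "avgN \<le> dfact k powr (1 / (2 * real k)) * (sqrt (real m) * Mx)"
        unfolding avgN_def Nes_def hp by (rule avg_ge2[OF freal m0 r2 k1 rk Mxr])
      also have "\<dots> \<le> sqrt r * (sqrt (real m) * Mx)"
        using dfact_root_le[OF k1 kle] Mx0 by (intro mult_right_mono) auto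
      finally show ?thesis unfolding c .
    qed
    have "rademacher xs G \<le> B / real m * avgN" using rad unfolding avgN_def .
    also have "\<dots> \<le> B / real m * (c * (sqrt (real m) * Mx))"
      using avg B0 m0 by (intro mult_left_mono) auto
    also have "\<dots> = \<mu> * Ec * c / sqrt (real m) * (a * Mx)"
    proof -
      have sm: "sqrt (real m) > 0" using m0 by simp
      have "real m = sqrt (real m) * sqrt (real m)" by simp
      then show ?thesis unfolding B_def using sm by (simp add: field_simps)
    qed
    finally show ?thesis unfolding c_def .
  qed
  have part2: "rademacher xs G \<le> \<mu> * Ec * sqrt (real_of_ereal (hconj p)) / (real m powr (1 / p)) * (a * Mx)"
    if p2: "2 < p"
  proof -
    define r where "r = p / (p - 1)"
    have p1: "p > 1" using p2 by simp
    have r12: "r \<ge> 1" "r \<le> 2" using p2 by (auto simp: r_def field_simps)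
    have hp: "hconj p = ereal r" using p1 by (simp add: hconj_gt1 r_def)
    have Mxr: "lnorm (4^n0) (f i) (ereal r) \<le> Mx" if "i < m" for i using Mxb[OF that] hp by simp
    have avg: "avgN \<le> real m powr (1/r) * Mx"
      unfolding avgN_def Nes_def hp by (rule avg_le2[OF freal m0 r12 Mxr])
    have "rademacher xs G \<le> B / real m * avgN" using rad unfolding avgN_def .
    also have "\<dots> \<le> B / real m * (real m powr (1/r) * Mx)"
      using avg B0 m0 by (intro mult_left_mono) auto
    also have "\<dots> = \<mu> * Ec / (real m powr (1 / p)) * (a * Mx)"
    proof -
      have e: "1/r = 1 - 1/p" using p1 by (simp add: r_def field_simps)
      have mp: "real m powr (1/r) = real m / real m powr (1/p)"
        using m0 unfolding e by (simp add: powr_diff)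
      have "real m powr (1/p) > 0" using m0 by simp
      then show ?thesis unfolding B_def mp using m0 by (simp add: field_simps)
    qed
    also have "\<dots> \<le> \<mu> * Ec * sqrt (real_of_ereal (hconj p)) / (real m powr (1 / p)) * (a * Mx)"
    proof -
      have s1: "sqrt (real_of_ereal (hconj p)) \<ge> 1" using r12 hp by simp
      have nn: "0 \<le> \<mu> * Ec / (real m powr (1 / p)) * (a * Mx)"
        using assms(4) Ec0 a0 Mx0 by simp
      define X where "X = \<mu> * Ec / (real m powr (1 / p)) * (a * Mx)"
      have "1 * X \<le> sqrt (real_of_ereal (hconj p)) * X" using s1 nn unfolding X_def[symmetric] by (rule mult_right_mono)
      then have "X \<le> sqrt (real_of_ereal (hconj p)) * X" by simp
      then show ?thesis unfolding X_def by (simp add: mult_ac)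
    qed
    finally show ?thesis .
  qed
  show ?thesis
    unfolding Let_def
    using part1 part2
    unfolding m_def[symmetric] G_def[symmetric] Ec_def[symmetric] n0_def[symmetric] nl_def[symmetric] K
    by blast
qed

end
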